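(* Let $(\Omega,\Sigma,\mu;\phi)$ be a bimeasurable measure preserving dynamical system and let $P$ be its Perron-Frobenius operator on $L^1(\Omega,\Sigma,\mu)$. Then the following assertions are equivalent. (i) For all $A\in \Sigma$ the sequence $(\phi^{n}(A))_{n\in\mathbb{N}}$ converges in the measure algebra $\Sigma/\sim$. (ii) For all $f\in L^1(\Omega,\Sigma,\mu)$ the sequence $(P^nf)_{n\in\mathbb{N}}$ converges in $L^1(\Omega,\Sigma,\mu)$. (iii) $\overline{\Sigma_\infty} = \overline{\Sigma_{\mathrm{inv}}}$. Moreover, if these equivalent assertions hold, then for each $f\in L^1(\Omega,\Sigma,\mu)$ the sequence $(P^nf)_{n\in\mathbb{N}}$ converges to $\mathbb{E}(f\mid \Sigma_{\mathrm{inv}})$, and for each $A\in\Sigma$ the sequence $(\phi^n(A))_{n\in\mathbb{N}}$ converges in $\Sigma/\sim$ to the minimal invariant superset $A^*$.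
   Context: A measure preserving dynamical system $(\Omega,\Sigma,\mu;\phi)$ is a probability space $(\Omega,\Sigma,\mu)$ with a measurable map $\phi\colon\Omega\to\Omega$ such that $\mu(\phi^{-1}(A))=\mu(A)$ for all $A\in\Sigma$. It is bimeasurable if $\phi^{-1}(A)\in\Sigma$ and $\phi(A)\in\Sigma$ for all $A\in\Sigma$. The Perron-Frobenius operator $P$ is the unique linear positive operator on $L^1(\Omega,\Sigma,\mu)$ with $\int_A Pf\,d\mu=\int_{\phi^{-1}(A)}f\,d\mu$ for all $f\in L^1$, $A\in\Sigma$. On $\Sigma$ write $A\sim B$ iff $\mu(A\triangle B)=0$; the measure algebra $\Sigma/\sim$ is the set of equivalence classes with metric $d(A,B)=\mu(A\triangle B)$ (sets are identified with their classes). Let $\Sigma_n=\{\phi^{-n}(A):A\in\Sigma\}$, $\Sigma_\infty=\bigcap_{n\in\mathbb{N}}\Sigma_n$, and $\Sigma_{\mathrm{inv}}=\{A\in\Sigma:\phi^{-1}(A)=A\}$. For a sub-$\sigma$-algebra $\mathcal{G}\subseteq\Sigma$, its completion within $\Sigma$ is $\overline{\mathcal{G}}=\{A\in\Sigma: \exists B\in\mathcal{G},\ \mu(A\triangle B)=0\}$. $\mathbb{E}(f\mid\Sigma_{\mathrm{inv}})$ denotes the conditional expectation of $f$ with respect to $\Sigma_{\mathrm{inv}}$. For $A\subseteq\Omega$, the minimal invariant superset $A^*$ is the intersection of all sets $B\subseteq\Omega$ with $A\subseteq B$ and $\phi^{-1}(B)=B$ (for bimeasurable $\phi$ and $A\in\Sigma$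 this set lies in $\Sigma$). *)

theory Defs
  imports "HOL-Probability.Probability"
begin

definition mpds :: "'a measure \<Rightarrow> ('a \<Rightarrow> 'a) \<Rightarrow> bool" where
  "mpds M \<phi> \<longleftrightarrow> prob_space M \<and> \<phi> \<in> M \<rightarrow>\<^sub>M M \<and>
     (\<forall>A\<in>sets M. emeasure M (\<phi> -` A \<inter> space M) = emeasure M A)"

definition bimeasurable :: "'a measure \<Rightarrow> ('a \<Rightarrow> 'a) \<Rightarrow> bool" where
  "bimeasurable M \<phi> \<longleftrightarrow> (\<forall>A\<in>sets M. \<phi> -` A \<inter> space M \<in> sets M \<and> \<phi> ` A \<in> sets M)"

text \<open>Perron-Frobenius operator, given by its defining identity on L^1 (which determines P f a.e.).\<close>
definition perron_frobenius :: "'a measure \<Rightarrow> ('a \<Rightarrow> 'a) \<Rightarrow> (('a \<Rightarrow> real) \<Rightarrow> ('a \<Rightarrow> real)) \<Rightarrow> bool" where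
  "perron_frobenius M \<phi> P \<longleftrightarrow> (\<forall>f. integrable M f \<longrightarrow> integrable M (P f) \<and>
     (\<forall>A\<in>sets M. (\<integral>x\<in>A. P f x \<partial>M) = (\<integral>x\<in>(\<phi> -` A \<inter> space M). f x \<partial>M)))"

definition conv_measure_algebra :: "'a measure \<Rightarrow> (nat \<Rightarrow> 'a set) \<Rightarrow> 'a set \<Rightarrow> bool" where
  "conv_measure_algebra M S B \<longleftrightarrow> B \<in> sets M \<and>
     (\<lambda>n. measure M ((S n - B) \<union> (B - S n))) \<longlonglongrightarrow> 0"

definition conv_L1 :: "'a measure \<Rightarrow> (nat \<Rightarrow> 'a \<Rightarrow> real) \<Rightarrow> ('a \<Rightarrow> real) \<Rightarrow> bool" where
  "conv_L1 M F g \<longleftrightarrow> integrable M g \<and> (\<lambda>n. \<integral>x. \<bar>F n x - g x\<bar> \<partial>M) \<longlonglongrightarrow> 0"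

definition Sigma_n :: "'a measure \<Rightarrow> ('a \<Rightarrow> 'a) \<Rightarrow> nat \<Rightarrow> 'a set set" where
  "Sigma_n M \<phi> n = {(\<phi> ^^ n) -` A \<inter> space M | A. A \<in> sets M}"

definition Sigma_infty :: "'a measure \<Rightarrow> ('a \<Rightarrow> 'a) \<Rightarrow> 'a set set" where
  "Sigma_infty M \<phi> = (\<Inter>n. Sigma_n M \<phi> n)"

definition Sigma_inv :: "'a measure \<Rightarrow> ('a \<Rightarrow> 'a) \<Rightarrow> 'a set set" where
  "Sigma_inv M \<phi> = {A \<in> sets M. \<phi> -` A \<inter> space M = A}"

definition completion_within :: "'a measure \<Rightarrow> 'a set set \<Rightarrow> 'a set set" where
  "completion_within M G = {A \<in> sets M. \<exists>B\<in>G. measure M ((A - B) \<union> (B - A)) = 0}"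

definition min_inv_superset :: "'a measure \<Rightarrow> ('a \<Rightarrow> 'a) \<Rightarrow> 'a set \<Rightarrow> 'a set" where
  "min_inv_superset M \<phi> A = \<Inter>{B. B \<subseteq> space M \<and> A \<subseteq> B \<and> \<phi> -` B \<inter> space M = B}"

end

theory Submission
  imports Defs
begin

lemma integrable_ind_mult[intro]:
  fixes f :: "'a \<Rightarrow> real"
  shows "A \<in> sets M \<Longrightarrow> integrable M f \<Longrightarrow> integrable M (\<lambda>x. indicator A x * f x)"
  using integrable_mult_indicator[of A M f] by simp

lemma setint_diff:
  fixes f g :: "'a \<Rightarrow> real"
  shows "A \<in> sets M \<Longrightarrow> integrable M f \<Longrightarrow> integrable M g \<Longrightarrow>
    (\<integral>x\<in>A. f x - g x \<partial>M) = (\<integral>x\<in>A. f x \<partial>M) - (\<integral>x\<in>A. g x \<partial>M)"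
  by (rule set_integral_diff(2)) (auto simp: set_integrable_def intro: integrable_mult_indicator)

lemma funpow_split: "n \<le> m \<Longrightarrow> (f ^^ m) x = (f ^^ (m - n)) ((f ^^ n) x)"
  by (metis funpow_add comp_apply le_add_diff_inverse2)

locale pfs =
  fixes M :: "'a measure" and \<phi> :: "'a \<Rightarrow> 'a" and P :: "('a \<Rightarrow> real) \<Rightarrow> ('a \<Rightarrow> real)"
  assumes mp: "mpds M \<phi>" and bm: "bimeasurable M \<phi>" and pf: "perron_frobenius M \<phi> P"
begin

sublocale prob_space M using mp unfolding mpds_def by auto

lemma phi_meas[measurable]: "\<phi> \<in> M \<rightarrow>\<^sub>M M" using mp unfolding mpds_def by auto

lemma phin_meas[measurable]: "(\<phi> ^^ n) \<in> M \<rightarrow>\<^sub>M M"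
  by (induction n) (auto intro: measurable_compose[OF _ phi_meas])

lemma phin_space: "x \<in> space M \<Longrightarrow> (\<phi> ^^ n) x \<in> space M"
  using measurable_space[OF phin_meas] by blast

lemma phi_space: "x \<in> space M \<Longrightarrow> \<phi> x \<in> space M"
  using measurable_space[OF phi_meas] by blast

lemma pre_Suc: "(\<phi> ^^ Suc n) -` A \<inter> space M = (\<phi> ^^ n) -` (\<phi> -` A \<inter> space M) \<inter> space M"
  using phin_space by auto

lemma emeasure_pre1: "A \<in> sets M \<Longrightarrow> emeasure M (\<phi> -` A \<inter> space M) = emeasure M A"
  using mp unfolding mpds_def by auto

lemma emeasure_pre: "A \<in> sets M \<Longrightarrow> emeasure M ((\<phi> ^^ n) -` A \<inter> space M) = emeasure M A"
proof (induction n arbitrary: A)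
  case 0 then show ?case using sets.sets_into_space by (simp add: Int_absorb2)
next
  case (Suc n)
  have h: "\<phi> -` A \<inter> space M \<in> sets M" using Suc.prems by measurable
  show ?case unfolding pre_Suc by (subst Suc.IH[OF h]) (rule emeasure_pre1[OF Suc.prems])
qed

lemma measure_pre: "A \<in> sets M \<Longrightarrow> measure M ((\<phi> ^^ n) -` A \<inter> space M) = measure M A"
  using emeasure_pre by (simp add: measure_def)

lemma distr_phin: "distr M M (\<phi> ^^ n) = M"
  by (rule measure_eqI) (auto simp: emeasure_distr emeasure_pre)

lemma integral_phin: "(f::'a\<Rightarrow>real) \<in> borel_measurable M \<Longrightarrow> (\<integral>x. f ((\<phi> ^^ n) x) \<partial>M) = (\<integral>x. f x \<partial>M)"
  using integral_distr[OF phin_meas, of f n] by (simp add: distr_phin)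

lemma integrable_phin: "integrable M (f::'a\<Rightarrow>real) \<Longrightarrow> integrable M (\<lambda>x. f ((\<phi> ^^ n) x))"
  using integrable_distr_eq[OF phin_meas, of f n] by (simp add: distr_phin)

lemma Pn_int: "integrable M f \<Longrightarrow> integrable M ((P ^^ n) f) \<and>
  (\<forall>A\<in>sets M. (\<integral>x\<in>A. (P ^^ n) f x \<partial>M) = (\<integral>x\<in>((\<phi> ^^ n) -` A \<inter> space M). f x \<partial>M))"
proof (induction n)
  case 0 then show ?case using sets.sets_into_space by (simp add: Int_absorb2)
next
  case (Suc n)
  have i: "integrable M ((P ^^ n) f)" using Suc by auto
  have "integrable M (P ((P ^^ n) f))" using pf i unfolding perron_frobenius_def by auto
  moreover have "(\<integral>x\<in>A. P ((P ^^ n) f) x \<partial>M) = (\<integral>x\<in>((\<phi> ^^ Suc n) -` A \<inter> space M). f x \<partial>M)"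
    if A: "A \<in> sets M" for A
  proof -
    have h: "\<phi> -` A \<inter> space M \<in> sets M" using A by measurable
    have "(\<integral>x\<in>A. P ((P ^^ n) f) x \<partial>M) = (\<integral>x\<in>(\<phi> -` A \<inter> space M). (P ^^ n) f x \<partial>M)"
      using pf i A unfolding perron_frobenius_def by auto
    also have "\<dots> = (\<integral>x\<in>((\<phi> ^^ Suc n) -` A \<inter> space M). f x \<partial>M)"
      unfolding pre_Suc using Suc h by auto
    finally show ?thesis .
  qed
  ultimately show ?case by (simp add: comp_def)
qed

lemma Pn_integrable: "integrable M f \<Longrightarrow> integrable M ((P ^^ n) f)"
  using Pn_int by auto

lemma Pn_setint: "integrable M f \<Longrightarrow> A \<in> sets M \<Longrightarrow>
  (\<integral>x\<in>A. (P ^^ n) f x \<partial>M) = (\<integral>x\<in>((\<phi> ^^ n) -` A \<inter> space M). f x \<partial>M)"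
  using Pn_int by auto

end

lemma (in finite_measure) abs_int_le:
  fixes w v :: "'a \<Rightarrow> real"
  assumes w: "integrable M w" and v: "integrable M v" and X: "X \<in> sets M"
    and B: "B = {x\<in>space M. 0 \<le> w x}"
    and e1: "(\<integral>x\<in>B. w x \<partial>M) = (\<integral>x\<in>X. v x \<partial>M)"
    and e2: "(\<integral>x\<in>(space M - B). w x \<partial>M) = (\<integral>x\<in>(space M - X). v x \<partial>M)"
  shows "(\<integral>x. \<bar>w x\<bar> \<partial>M) \<le> (\<integral>x. \<bar>v x\<bar> \<partial>M)"
proof -
  have Bs: "B \<in> sets M" unfolding B using w by measurable
  have "(\<integral>x. \<bar>w x\<bar> \<partial>M) = (\<integral>x. indicator B x * w x - indicator (space M - B) x * w x \<partial>M)"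
    by (rule Bochner_Integration.integral_cong) (auto simp: B indicator_def)
  also have "\<dots> = (\<integral>x\<in>B. w x \<partial>M) - (\<integral>x\<in>(space M - B). w x \<partial>M)"
    unfolding set_lebesgue_integral_def using Bs w
    by (simp add: integral_diff integrable_ind_mult sets.compl_sets)
  also have "\<dots> = (\<integral>x\<in>X. v x \<partial>M) - (\<integral>x\<in>(space M - X). v x \<partial>M)" using e1 e2 by simp
  also have "\<dots> = (\<integral>x. indicator X x * v x - indicator (space M - X) x * v x \<partial>M)"
    unfolding set_lebesgue_integral_def using X v
    by (simp add: integral_diff integrable_ind_mult sets.compl_sets)
  also have "\<dots> \<le> (\<integral>x. \<bar>v x\<bar> \<partial>M)"
    using X v by (intro integral_mono Bochner_Integration.integrable_diff integrable_ind_mult)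
      (auto simp: indicator_def sets.compl_sets)
  finally show ?thesis .
qed


context pfs
begin

lemma contraction:
  assumes f: "integrable M f" and g: "integrable M g"
  shows "(\<integral>x. \<bar>(P ^^ n) f x - (P ^^ n) g x\<bar> \<partial>M) \<le> (\<integral>x. \<bar>f x - g x\<bar> \<partial>M)"
proof -
  define w where "w = (\<lambda>x. (P ^^ n) f x - (P ^^ n) g x)"
  define B where "B = {x\<in>space M. 0 \<le> w x}"
  have fi: "integrable M ((P ^^ n) f)" "integrable M ((P ^^ n) g)" using f g Pn_integrable by auto
  then have wi: "integrable M w" unfolding w_def by auto
  have Bs: "B \<in> sets M" unfolding B_def using wi by measurable
  have Bc: "space M - B \<in> sets M" using Bs by auto
  have X: "(\<phi> ^^ n) -` B \<inter> space M \<in> sets M" using Bs by measurable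
  have Xc: "(\<phi> ^^ n) -` (space M - B) \<inter> space M = space M - ((\<phi> ^^ n) -` B \<inter> space M)"
    using phin_space by auto
  have "(\<integral>x. \<bar>w x\<bar> \<partial>M) \<le> (\<integral>x. \<bar>f x - g x\<bar> \<partial>M)"
  proof (rule abs_int_le[OF wi _ X B_def])
    show "integrable M (\<lambda>x. f x - g x)" using f g by auto
    show "(\<integral>x\<in>B. w x \<partial>M) = (\<integral>x\<in>((\<phi> ^^ n) -` B \<inter> space M). f x - g x \<partial>M)"
      unfolding w_def using setint_diff[OF Bs fi] setint_diff[OF X f g] Pn_setint[OF f Bs] Pn_setint[OF g Bs] by simp
    show "(\<integral>x\<in>(space M - B). w x \<partial>M) = (\<integral>x\<in>(space M - ((\<phi> ^^ n) -` B \<inter> space M)). f x - g x \<partial>M)"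
    proof -
      have X2: "(\<phi> ^^ n) -` (space M - B) \<inter> space M \<in> sets M" using Bc by measurable
      show ?thesis
        unfolding w_def Xc[symmetric] using setint_diff[OF Bc fi] setint_diff[OF X2 f g] Pn_setint[OF f Bc] Pn_setint[OF g Bc] by simp
    qed
  qed
  then show ?thesis unfolding w_def by simp
qed

lemma zero_setint:
  fixes w :: "'a \<Rightarrow> real"
  assumes wi: "integrable M w" and z: "\<And>B. B \<in> sets M \<Longrightarrow> (\<integral>x\<in>B. w x \<partial>M) = 0"
  shows "AE x in M. w x = 0"
proof -
  define B where "B = {x\<in>space M. 0 \<le> w x}"
  have Bs: "B \<in> sets M" unfolding B_def using wi by measurable
  have Bc: "space M - B \<in> sets M" using Bs by auto
  have "(\<integral>x. \<bar>w x\<bar> \<partial>M) \<le> (\<integral>x. \<bar>(0::real)\<bar> \<partial>M)"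
    by (rule abs_int_le[OF wi _ _ B_def]) (auto simp: z Bs Bc)
  then have "(\<integral>x. \<bar>w x\<bar> \<partial>M) = 0" by (simp add: antisym)
  then have "AE x in M. \<bar>w x\<bar> = 0" using wi by (subst integral_nonneg_eq_0_iff_AE[symmetric]) auto
  then show ?thesis by auto
qed

lemma setint_phin:
  fixes F :: "'a \<Rightarrow> real"
  assumes F: "F \<in> borel_measurable M" and B: "B \<in> sets M"
  shows "(\<integral>x\<in>((\<phi> ^^ n) -` B \<inter> space M). F ((\<phi> ^^ n) x) \<partial>M) = (\<integral>x\<in>B. F x \<partial>M)"
proof -
  have "(\<integral>x\<in>((\<phi> ^^ n) -` B \<inter> space M). F ((\<phi> ^^ n) x) \<partial>M) = (\<integral>x. indicator B ((\<phi> ^^ n) x) * F ((\<phi> ^^ n) x) \<partial>M)"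
    unfolding set_lebesgue_integral_def
    by (rule Bochner_Integration.integral_cong) (auto simp: indicator_def)
  also have "\<dots> = (\<integral>x. indicator B x * F x \<partial>M)"
    by (rule integral_phin[of "\<lambda>x. indicator B x * F x"]) (use F B in measurable)
  finally show ?thesis unfolding set_lebesgue_integral_def by simp
qed

definition S :: "nat \<Rightarrow> 'a measure" where "S n = vimage_algebra (space M) (\<phi> ^^ n) M"

lemma sets_S: "sets (S n) = Sigma_n M \<phi> n"
  unfolding S_def Sigma_n_def by (rule sets_vimage_algebra2) (auto simp: phin_space)

lemma space_S[simp]: "space (S n) = space M" unfolding S_def by simp

lemma subalg_S: "subalgebra M (S n)"
  unfolding subalgebra_def sets_S Sigma_n_def by auto

lemma subalg_SS: "n \<le> m \<Longrightarrow> subalgebra (S n) (S m)"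
proof -
  assume nm: "n \<le> m"
  have "(\<phi> ^^ m) -` A \<inter> space M \<in> Sigma_n M \<phi> n" if A: "A \<in> sets M" for A
  proof -
    have e: "(\<phi> ^^ m) -` A \<inter> space M = (\<phi> ^^ n) -` ((\<phi> ^^ (m - n)) -` A \<inter> space M) \<inter> space M"
      using nm phin_space funpow_split[OF nm, of \<phi>] by auto
    have "(\<phi> ^^ (m - n)) -` A \<inter> space M \<in> sets M" using A by measurable
    then show ?thesis unfolding e Sigma_n_def by blast
  qed
  then show ?thesis unfolding subalgebra_def sets_S by (auto simp: Sigma_n_def)
qed

lemma sfs_S: "sigma_finite_subalgebra M (S n)"
  by (rule finite_measure_subalgebra_is_sigma_finite)
     (simp add: finite_measure_subalgebra_def finite_measure_subalgebra_axioms_def subalg_S finite_measure_axioms)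

lemma meas_S: "F \<in> borel_measurable M \<Longrightarrow> (\<lambda>x. F ((\<phi> ^^ n) x)) \<in> borel_measurable (S n)"
proof -
  assume F: "F \<in> borel_measurable M"
  have "(\<phi> ^^ n) \<in> S n \<rightarrow>\<^sub>M M" unfolding S_def
    by (rule measurable_vimage_algebra1) (auto simp: phin_space)
  then show ?thesis using F by (rule measurable_compose)
qed

lemma PE:
  assumes f: "integrable M f"
  shows "AE x in M. real_cond_exp M (S n) f x = (P ^^ n) f ((\<phi> ^^ n) x)"
proof -
  interpret sigma_finite_subalgebra M "S n" by (rule sfs_S)
  have Fi: "integrable M ((P ^^ n) f)" using f Pn_integrable by auto
  show ?thesis
  proof (rule real_cond_exp_charact)
    fix A assume "A \<in> sets (S n)"
    then obtain B where B: "B \<in> sets M" and A: "A = (\<phi> ^^ n) -` B \<inter> space M"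
      unfolding sets_S Sigma_n_def by auto
    show "(\<integral>x\<in>A. f x \<partial>M) = (\<integral>x\<in>A. (P ^^ n) f ((\<phi> ^^ n) x) \<partial>M)"
      unfolding A using setint_phin[OF borel_measurable_integrable[OF Fi] B] Pn_setint[OF f B] by simp
  next
    show "integrable M f" by fact
    show "integrable M (\<lambda>x. (P ^^ n) f ((\<phi> ^^ n) x))" using integrable_phin[OF Fi] .
    show "(\<lambda>x. (P ^^ n) f ((\<phi> ^^ n) x)) \<in> borel_measurable (S n)"
      using meas_S[OF borel_measurable_integrable[OF Fi]] .
  qed
qed


definition Inv :: "'a measure" where "Inv = sigma (space M) (Sigma_inv M \<phi>)"

lemma Sigma_inv_sub: "Sigma_inv M \<phi> \<subseteq> Pow (space M)"
  unfolding Sigma_inv_def using sets.sets_into_space by auto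

lemma space_Inv[simp]: "space Inv = space M"
  unfolding Inv_def using Sigma_inv_sub by simp

lemma sets_Inv: "sets Inv = sigma_sets (space M) (Sigma_inv M \<phi>)"
  unfolding Inv_def using Sigma_inv_sub by simp

lemma inv_sets: "A \<in> sets Inv \<Longrightarrow> A \<in> sets M \<and> \<phi> -` A \<inter> space M = A"
  unfolding sets_Inv
proof (induction rule: sigma_sets.induct)
  case (Basic a) then show ?case unfolding Sigma_inv_def by auto
next
  case Empty then show ?case by auto
next
  case (Compl a)
  then have e: "\<phi> -` a \<inter> space M = a" and as: "a \<in> sets M" by auto
  have "\<phi> -` (space M - a) \<inter> space M = space M - (\<phi> -` a \<inter> space M)" using phi_space by blast
  then have "\<phi> -` (space M - a) \<inter> space M = space M - a" by (simp only: e)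
  then show ?case using as by auto
next
  case (Union a)
  have e: "x \<in> a i \<longleftrightarrow> x \<in> space M \<and> \<phi> x \<in> a i" for i x
  proof -
    have "\<phi> -` a i \<inter> space M = a i" using Union.IH by auto
    then show ?thesis by (metis Int_iff vimage_eq)
  qed
  have "\<phi> -` (\<Union> (range a)) \<inter> space M = \<Union> (range a)" using e by blast
  moreover have "\<Union> (range a) \<in> sets M" using Union.IH by auto
  ultimately show ?case by simp
qed

lemma inv_pre_n: "A \<subseteq> space M \<Longrightarrow> \<phi> -` A \<inter> space M = A \<Longrightarrow> (\<phi> ^^ n) -` A \<inter> space M = A"
proof (induction n)
  case 0 then show ?case by auto
next
  case (Suc n) then show ?case unfolding pre_Suc by simp
qed

lemma Sigma_inv_infty: "Sigma_inv M \<phi> \<subseteq> Sigma_infty M \<phi>"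
proof
  fix A assume A: "A \<in> Sigma_inv M \<phi>"
  then have As: "A \<in> sets M" and Ai: "\<phi> -` A \<inter> space M = A" unfolding Sigma_inv_def by auto
  have "A \<in> Sigma_n M \<phi> n" for n
    unfolding Sigma_n_def using inv_pre_n[OF sets.sets_into_space[OF As] Ai, of n] As by blast
  then show "A \<in> Sigma_infty M \<phi>" unfolding Sigma_infty_def by auto
qed

lemma subalg_Inv: "subalgebra M Inv"
proof -
  have "sets Inv \<subseteq> sets M" using inv_sets by blast
  then show ?thesis by (simp add: subalgebra_def)
qed

lemma Inv_Sigma_n: "A \<in> sets Inv \<Longrightarrow> A \<in> Sigma_n M \<phi> m"
proof -
  assume A: "A \<in> sets Inv"
  have As: "A \<in> sets M" and Ai: "\<phi> -` A \<inter> space M = A" using inv_sets[OF A] by auto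
  have e: "(\<phi> ^^ m) -` A \<inter> space M = A" by (rule inv_pre_n[OF sets.sets_into_space[OF As] Ai])
  show ?thesis unfolding Sigma_n_def by (rule CollectI, rule exI[of _ A]) (simp add: e As)
qed

lemma subalg_SInv: "subalgebra (S m) Inv"
proof -
  have "sets Inv \<subseteq> sets (S m)" unfolding sets_S using Inv_Sigma_n by blast
  then show ?thesis by (simp add: subalgebra_def)
qed

lemma sfs_Inv: "sigma_finite_subalgebra M Inv"
  by (rule finite_measure_subalgebra_is_sigma_finite)
     (simp add: finite_measure_subalgebra_def finite_measure_subalgebra_axioms_def subalg_Inv finite_measure_axioms)

lemma inv_fun:
  fixes F :: "'a \<Rightarrow> real"
  assumes F: "F \<in> borel_measurable Inv" and x: "x \<in> space M"
  shows "F (\<phi> x) = F x"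
proof -
  define L where "L = F -` {F x} \<inter> space Inv"
  have "L \<in> sets Inv" unfolding L_def by (rule measurable_sets[OF F]) auto
  then have "\<phi> -` L \<inter> space M = L" using inv_sets by auto
  moreover have "x \<in> L" unfolding L_def using x by auto
  ultimately have "\<phi> x \<in> L" by blast
  then show ?thesis unfolding L_def by auto
qed

lemma inv_funn:
  fixes F :: "'a \<Rightarrow> real"
  assumes F: "F \<in> borel_measurable Inv" and x: "x \<in> space M"
  shows "F ((\<phi> ^^ n) x) = F x"
proof (induction n)
  case 0 then show ?case by simp
next
  case (Suc n) then show ?case using inv_fun[OF F phin_space[OF x, of n]] by simp
qed

end

lemma (in prob_space) abs_int_sqrt:
  fixes u :: "'a \<Rightarrow> real"
  assumes u: "integrable M u" and u2: "integrable M (\<lambda>x. (u x)^2)"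
  shows "(\<integral>x. \<bar>u x\<bar> \<partial>M) \<le> sqrt (\<integral>x. (u x)^2 \<partial>M)"
proof -
  define t where "t = (\<integral>x. \<bar>u x\<bar> \<partial>M)"
  have t0: "0 \<le> t" unfolding t_def by (rule Bochner_Integration.integral_nonneg) simp
  have i1: "integrable M (\<lambda>x. 2 * t * \<bar>u x\<bar>)" using u by (intro integrable_mult_right integrable_abs)
  have i2: "integrable M (\<lambda>x. (u x)^2 - 2 * t * \<bar>u x\<bar>)" using u2 i1 by (rule Bochner_Integration.integrable_diff)
  have "0 \<le> (\<integral>x. (\<bar>u x\<bar> - t)^2 \<partial>M)" by (rule Bochner_Integration.integral_nonneg) simp
  also have "(\<integral>x. (\<bar>u x\<bar> - t)^2 \<partial>M) = (\<integral>x. (u x)^2 - 2 * t * \<bar>u x\<bar> + t^2 \<partial>M)"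
    by (rule Bochner_Integration.integral_cong) (auto simp: power2_eq_square algebra_simps)
  also have "\<dots> = (\<integral>x. (u x)^2 - 2 * t * \<bar>u x\<bar> \<partial>M) + (\<integral>x. t^2 \<partial>M)"
    by (rule Bochner_Integration.integral_add[OF i2]) (rule integrable_const)
  also have "(\<integral>x. (u x)^2 - 2 * t * \<bar>u x\<bar> \<partial>M) = (\<integral>x. (u x)^2 \<partial>M) - (\<integral>x. 2 * t * \<bar>u x\<bar> \<partial>M)"
    by (rule Bochner_Integration.integral_diff[OF u2 i1])
  also have "(\<integral>x. 2 * t * \<bar>u x\<bar> \<partial>M) = 2 * t * t"
    unfolding t_def by (rule integral_mult_right_zero)
  also have "(\<integral>x. t^2 \<partial>M) = t^2" by (simp add: prob_space)
  finally have "0 \<le> (\<integral>x. (u x)^2 \<partial>M) - 2 * t * t + t^2" .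
  then have "t^2 \<le> (\<integral>x. (u x)^2 \<partial>M)" by (simp add: power2_eq_square)
  then have "t \<le> sqrt (\<integral>x. (u x)^2 \<partial>M)" by (rule real_le_rsqrt)
  then show ?thesis by (simp only: t_def)
qed

lemma bounded_integrable:
  fixes g :: "'a \<Rightarrow> real"
  assumes "finite_measure M" "g \<in> borel_measurable M" "AE x in M. \<bar>g x\<bar> \<le> C"
  shows "integrable M g"
proof -
  interpret finite_measure M by fact
  show ?thesis by (rule Bochner_Integration.integrable_bound[OF integrable_const[of C]]) (use assms in auto)
qed

context pfs
begin

lemma null_of_measure0: "A \<in> sets M \<Longrightarrow> measure M A = 0 \<Longrightarrow> A \<in> null_sets M"
  by (simp add: emeasure_eq_measure null_sets_def)

lemma ae_le_III:
  fixes u v :: "'a \<Rightarrow> real"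
  assumes III: "completion_within M (Sigma_infty M \<phi>) = completion_within M (Sigma_inv M \<phi>)"
    and u: "integrable M u" and v: "integrable M v"
    and um: "\<And>m. u \<in> borel_measurable (S m)" and vm: "\<And>m. v \<in> borel_measurable (S m)"
    and eq: "\<And>C. C \<in> Sigma_inv M \<phi> \<Longrightarrow> (\<integral>x\<in>C. u x \<partial>M) = (\<integral>x\<in>C. v x \<partial>M)"
  shows "AE x in M. u x \<le> v x"
proof -
  define C where "C = {x \<in> space M. v x < u x}"
  have CS: "C \<in> sets (S m)" for m
  proof -
    have [measurable]: "u \<in> borel_measurable (S m)" "v \<in> borel_measurable (S m)" using um vm by auto
    have "{x \<in> space (S m). v x < u x} \<in> sets (S m)" by measurable
    then show ?thesis unfolding C_def by simp
  qed
  have Cinf: "C \<in> Sigma_infty M \<phi>" unfolding Sigma_infty_def using CS sets_S by auto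
  have Cs: "C \<in> sets M" using CS[of 0] subalg_S[of 0] unfolding subalgebra_def by auto
  have "C \<in> completion_within M (Sigma_infty M \<phi>)" unfolding completion_within_def
    using Cs Cinf by (auto intro!: bexI[of _ C])
  then obtain C' where C': "C' \<in> Sigma_inv M \<phi>" and d: "measure M ((C - C') \<union> (C' - C)) = 0"
    using III unfolding completion_within_def by auto
  have C's: "C' \<in> sets M" using C' unfolding Sigma_inv_def by auto
  have null: "(C - C') \<union> (C' - C) \<in> null_sets M" using d Cs C's by (intro null_of_measure0) auto
  have ae: "AE x in M. x \<in> C' \<longleftrightarrow> x \<in> C" using AE_not_in[OF null] by auto
  have um0[measurable]: "u \<in> borel_measurable M" "v \<in> borel_measurable M" using u v by auto
  have "(\<integral>x\<in>C. u x - v x \<partial>M) = (\<integral>x\<in>C'. u x - v x \<partial>M)"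
    by (rule set_integral_cong_set) (use ae Cs C's in \<open>auto simp: set_borel_measurable_def\<close>)
  also have "\<dots> = (\<integral>x\<in>C'. u x \<partial>M) - (\<integral>x\<in>C'. v x \<partial>M)" by (rule setint_diff[OF C's u v])
  also have "\<dots> = 0" using eq[OF C'] by simp
  finally have z: "(\<integral>x. indicator C x * (u x - v x) \<partial>M) = 0"
    unfolding set_lebesgue_integral_def by simp
  have "AE x in M. indicator C x * (u x - v x) = 0"
  proof (rule integral_nonneg_eq_0_iff_AE[THEN iffD1, OF _ _ z])
    show "integrable M (\<lambda>x. indicator C x * (u x - v x))" using Cs u v by auto
    show "AE x in M. 0 \<le> indicator C x * (u x - v x)" by (auto simp: C_def indicator_def)
  qed
  then show ?thesis using AE_space by eventually_elim (auto simp: C_def indicator_def split: if_splits)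
qed

lemma lim_shift: "lim (\<lambda>k. X (k + m)) = (lim X :: real)"
proof -
  have "\<And>L. (\<lambda>k. X (k + m)) \<longlonglongrightarrow> L \<longleftrightarrow> X \<longlonglongrightarrow> L"
    using LIMSEQ_ignore_initial_segment LIMSEQ_offset by blast
  then show ?thesis by (simp add: lim_def)
qed

end

context pfs
begin

lemma conv_bounded:
  fixes f :: "'a \<Rightarrow> real"
  assumes III: "completion_within M (Sigma_infty M \<phi>) = completion_within M (Sigma_inv M \<phi>)"
    and fm[measurable]: "f \<in> borel_measurable M" and fb: "\<And>x. x \<in> space M \<Longrightarrow> \<bar>f x\<bar> \<le> c"
  shows "(\<lambda>n. \<integral>x. \<bar>(P ^^ n) f x - real_cond_exp M Inv f x\<bar> \<partial>M) \<longlonglongrightarrow> 0"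
proof -
  have fi: "integrable M f" by (rule bounded_integrable) (use fm fb in \<open>auto intro: finite_measure_axioms\<close>)
  define E where "E n = real_cond_exp M (S n) f" for n
  have Em: "E n \<in> borel_measurable (S n)" for n unfolding E_def by simp
  have EmM[measurable]: "E n \<in> borel_measurable M" for n unfolding E_def by simp
  have Ei: "integrable M (E n)" for n
    unfolding E_def using sigma_finite_subalgebra.real_cond_exp_int(1)[OF sfs_S fi] .
  have Eb: "AE x in M. \<bar>E n x\<bar> \<le> c" for n
  proof -
    have "AE x in M. E n x \<le> c" unfolding E_def
      by (rule sigma_finite_subalgebra.real_cond_exp_le_c[OF sfs_S fi]) (use fb abs_le_D1 in auto)
    moreover have "AE x in M. -c \<le> E n x" unfolding E_def
      by (rule sigma_finite_subalgebra.real_cond_exp_ge_c[OF sfs_S fi]) (use fb abs_le_D2 in force)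
    ultimately show ?thesis by eventually_elim auto
  qed
  have bi: "integrable M g" if "g \<in> borel_measurable M" "AE x in M. \<bar>g x\<bar> \<le> C" for g :: "'a \<Rightarrow> real" and C
    by (rule bounded_integrable[OF finite_measure_axioms that])
  have prodi: "integrable M (\<lambda>x. E m x * E n x)" for m n
  proof (rule bi)
    show "AE x in M. \<bar>E m x * E n x\<bar> \<le> c * c" using Eb[of m] Eb[of n]
      by eventually_elim (auto simp: abs_mult intro: mult_mono)
  qed simp
  have sqi: "integrable M (\<lambda>x. (E m x)^2)" for m using prodi[of m m] by (simp add: power2_eq_square)
  have cross: "(\<integral>x. E m x * E n x \<partial>M) = (\<integral>x. (E m x)^2 \<partial>M)" if nm: "n \<le> m" for n m
  proof -
    interpret Sm: sigma_finite_subalgebra M "S m" by (rule sfs_S)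
    have "(\<integral>x. E m x * real_cond_exp M (S m) (E n) x \<partial>M) = (\<integral>x. E m x * E n x \<partial>M)"
      by (rule Sm.real_cond_exp_intg(2)) (use prodi Em in auto)
    moreover have "AE x in M. real_cond_exp M (S m) (E n) x = E m x" unfolding E_def
      by (rule Sm.real_cond_exp_nested_subalg[OF subalg_S subalg_SS[OF nm] fi])
    then have "(\<integral>x. E m x * real_cond_exp M (S m) (E n) x \<partial>M) = (\<integral>x. E m x * E m x \<partial>M)"
      by (intro integral_cong_AE) auto
    ultimately show ?thesis by (simp add: power2_eq_square)
  qed
  define a where "a n = (\<integral>x. (E n x)^2 \<partial>M)" for n
  have diff_sq: "(\<integral>x. (E n x - E m x)^2 \<partial>M) = a n - a m" if nm: "n \<le> m" for n m
  proof -
    have "(\<integral>x. (E n x - E m x)^2 \<partial>M) = (\<integral>x. ((E n x)^2 + (E m x)^2) - 2 * (E m x * E n x) \<partial>M)"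
      by (rule Bochner_Integration.integral_cong) (auto simp: power2_eq_square algebra_simps)
    also have "\<dots> = (\<integral>x. (E n x)^2 + (E m x)^2 \<partial>M) - (\<integral>x. 2 * (E m x * E n x) \<partial>M)"
      by (rule Bochner_Integration.integral_diff) (use sqi prodi in auto)
    also have "(\<integral>x. (E n x)^2 + (E m x)^2 \<partial>M) = a n + a m"
      unfolding a_def by (rule Bochner_Integration.integral_add) (use sqi in auto)
    also have "(\<integral>x. 2 * (E m x * E n x) \<partial>M) = 2 * a m"
      unfolding a_def cross[OF nm, symmetric] by (rule integral_mult_right_zero)
    finally show ?thesis by simp
  qed
  have a_nonneg: "0 \<le> a n" for n unfolding a_def by (rule Bochner_Integration.integral_nonneg) simp
  have a_mono: "a m \<le> a n" if "n \<le> m" for n m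
  proof -
    have "0 \<le> (\<integral>x. (E n x - E m x)^2 \<partial>M)" by (rule Bochner_Integration.integral_nonneg) simp
    then show ?thesis using diff_sq[OF that] by simp
  qed
  have da: "decseq a" using a_mono by (simp add: decseq_def)
  obtain L where aL: "a \<longlonglongrightarrow> L" and Lle: "\<forall>i. L \<le> a i"
    using decseq_convergent[OF da, of 0] a_nonneg by blast
  define \<delta> where "\<delta> n = sqrt (a n - L)" for n
  have \<delta>0: "\<delta> \<longlonglongrightarrow> 0"
  proof -
    have "(\<lambda>n. a n - L) \<longlonglongrightarrow> L - L" by (intro tendsto_intros aL)
    then have "(\<lambda>n. sqrt (a n - L)) \<longlonglongrightarrow> sqrt (L - L)" by (rule tendsto_real_sqrt)
    then show ?thesis unfolding \<delta>_def by simp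
  qed
  have \<delta>_nonneg: "0 \<le> \<delta> n" for n unfolding \<delta>_def using Lle by simp
  have L1c: "(\<integral>x. \<bar>E n x - E m x\<bar> \<partial>M) \<le> \<delta> n" if nm: "n \<le> m" for n m
  proof -
    have "(\<integral>x. \<bar>E n x - E m x\<bar> \<partial>M) \<le> sqrt (\<integral>x. (E n x - E m x)^2 \<partial>M)"
    proof (rule abs_int_sqrt)
      show "integrable M (\<lambda>x. E n x - E m x)" using Ei by auto
      show "integrable M (\<lambda>x. (E n x - E m x)^2)"
      proof (rule bi)
        show "AE x in M. \<bar>(E n x - E m x)^2\<bar> \<le> (2*c)^2" using Eb[of n] Eb[of m]
        proof eventually_elim
          case (elim x)
          then have "\<bar>E n x - E m x\<bar> \<le> 2*c" by auto
          then have "\<bar>E n x - E m x\<bar>^2 \<le> (2*c)^2" by (intro power_mono) auto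
          then show ?case by simp
        qed
      qed simp
    qed
    also have "\<dots> \<le> \<delta> n" unfolding diff_sq[OF nm] \<delta>_def using Lle by simp
    finally show ?thesis .
  qed
  have "\<forall>k. \<exists>N. \<forall>m\<ge>N. \<delta> m < (1/2)^k"
  proof
    fix k :: nat
    have "(0::real) < (1/2)^k" by simp
    from LIMSEQ_D[OF \<delta>0 this] show "\<exists>N. \<forall>m\<ge>N. \<delta> m < (1/2)^k" using \<delta>_nonneg by auto
  qed
  then obtain N where N: "\<And>k m. N k \<le> m \<Longrightarrow> \<delta> m < (1/2)^k" by metis
  define ns where "ns k = k + (\<Sum>j\<le>k. N j)" for k
  have ns_N: "N k \<le> ns k" for k unfolding ns_def
    using member_le_sum[of k "{..k}" N] by auto
  have ns_k: "k \<le> ns k" for k unfolding ns_def by simp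
  have ns_mono: "ns k \<le> ns l" if "k \<le> l" for k l
  proof -
    have "(\<Sum>j\<le>k. N j) \<le> (\<Sum>j\<le>l. N j)" using that by (intro sum_mono2) auto
    then show ?thesis unfolding ns_def using that by simp
  qed
  define D where "D k x = \<bar>E (ns (Suc k)) x - E (ns k) x\<bar>" for k x
  have Di: "integrable M (D k)" for k unfolding D_def using Ei by auto
  have intD: "(\<integral>x. D k x \<partial>M) \<le> (1/2)^k" for k
  proof -
    have "(\<integral>x. D k x \<partial>M) = (\<integral>x. \<bar>E (ns k) x - E (ns (Suc k)) x\<bar> \<partial>M)"
      unfolding D_def by (simp add: abs_minus_commute)
    also have "\<dots> \<le> \<delta> (ns k)" by (rule L1c) (rule ns_mono, simp)
    also have "\<dots> \<le> (1/2)^k" using N[OF ns_N[of k]] by simp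
    finally show ?thesis .
  qed
  have sumfin: "(\<integral>\<^sup>+x. (\<Sum>k. ennreal (D k x)) \<partial>M) \<noteq> \<infinity>"
  proof -
    have "(\<integral>\<^sup>+x. (\<Sum>k. ennreal (D k x)) \<partial>M) = (\<Sum>k. \<integral>\<^sup>+x. ennreal (D k x) \<partial>M)"
      by (rule nn_integral_suminf) (simp add: D_def)
    also have "\<dots> = (\<Sum>k. ennreal (\<integral>x. D k x \<partial>M))"
      by (intro suminf_cong nn_integral_eq_integral Di) (simp add: D_def)
    also have "\<dots> \<le> (\<Sum>k. ennreal ((1/2)^k))"
      by (intro suminf_le summableI) (use intD in \<open>auto intro: ennreal_leI\<close>)
    also have "\<dots> = ennreal 2"
      by (rule suminf_ennreal_eq) (use geometric_sums[of "1/2::real"] in auto)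
    finally show ?thesis using top_neq_ennreal by (auto simp: top.extremum_unique)
  qed
  have AEs: "AE x in M. summable (\<lambda>k. D k x)"
  proof -
    have "AE x in M. (\<Sum>k. ennreal (D k x)) \<noteq> \<infinity>"
      by (rule nn_integral_PInf_AE[OF _ sumfin]) (simp add: D_def)
    then show ?thesis
      by eventually_elim (rule summable_suminf_not_top, auto simp: D_def)
  qed
  have AEc: "AE x in M. convergent (\<lambda>k. E (ns k) x)"
    using AEs
  proof eventually_elim
    case (elim x)
    then have "summable (\<lambda>k. E (ns (Suc k)) x - E (ns k) x)"
      unfolding D_def by (rule summable_rabs_cancel)
    from summable_LIMSEQ[OF this] obtain s where
      "(\<lambda>K. \<Sum>k<K. E (ns (Suc k)) x - E (ns k) x) \<longlonglongrightarrow> s" by blast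
    then have "(\<lambda>K. E (ns K) x - E (ns 0) x) \<longlonglongrightarrow> s"
      by (simp add: sum_lessThan_telescope[of "\<lambda>k. E (ns k) x"])
    then have "(\<lambda>K. E (ns K) x - E (ns 0) x + E (ns 0) x) \<longlonglongrightarrow> s + E (ns 0) x"
      by (intro tendsto_intros)
    then show ?case by (auto simp: convergent_def)
  qed
  define g where "g x = lim (\<lambda>k. E (ns k) x)" for x
  have gconv: "AE x in M. (\<lambda>k. E (ns k) x) \<longlonglongrightarrow> g x"
    using AEc by eventually_elim (simp add: g_def convergent_LIMSEQ_iff)
  have gS: "g \<in> borel_measurable (S m)" for m
  proof -
    have eq: "g = (\<lambda>x. lim (\<lambda>k. E (ns (k + m)) x))"
      unfolding g_def using lim_shift[of "\<lambda>k. E (ns k) _" m] by auto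
    have "E (ns (k + m)) \<in> borel_measurable (S m)" for k
    proof (rule measurable_from_subalg[OF subalg_SS Em])
      show "m \<le> ns (k + m)" using ns_k[of "k+m"] by simp
    qed
    then show ?thesis unfolding eq by (rule borel_measurable_lim_metric)
  qed
  have gM[measurable]: "g \<in> borel_measurable M" using measurable_from_subalg[OF subalg_S gS] .
  have fatou: "(\<integral>\<^sup>+x. ennreal \<bar>E n x - g x\<bar> \<partial>M) \<le> ennreal (\<delta> n)" for n
  proof -
    have "AE x in M. ennreal \<bar>E n x - g x\<bar> = liminf (\<lambda>k. ennreal \<bar>E n x - E (ns k) x\<bar>)"
      using gconv
    proof eventually_elim
      case (elim x)
      then have "(\<lambda>k. ennreal \<bar>E n x - E (ns k) x\<bar>) \<longlonglongrightarrow> ennreal \<bar>E n x - g x\<bar>"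
        by (intro tendsto_intros)
      then show ?case by (rule lim_imp_Liminf[symmetric, OF trivial_limit_sequentially])
    qed
    then have "(\<integral>\<^sup>+x. ennreal \<bar>E n x - g x\<bar> \<partial>M) = (\<integral>\<^sup>+x. liminf (\<lambda>k. ennreal \<bar>E n x - E (ns k) x\<bar>) \<partial>M)"
      by (rule nn_integral_cong_AE)
    also have "\<dots> \<le> liminf (\<lambda>k. \<integral>\<^sup>+x. ennreal \<bar>E n x - E (ns k) x\<bar> \<partial>M)"
      by (rule nn_integral_liminf) simp
    also have "\<dots> \<le> ennreal (\<delta> n)"
    proof (rule Liminf_le)
      show "\<forall>\<^sub>F k in sequentially. (\<integral>\<^sup>+x. ennreal \<bar>E n x - E (ns k) x\<bar> \<partial>M) \<le> ennreal (\<delta> n)"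
      proof (rule eventually_sequentiallyI[of n])
        fix k assume "n \<le> k"
        then have nk: "n \<le> ns k" using ns_k[of k] by simp
        have "(\<integral>\<^sup>+x. ennreal \<bar>E n x - E (ns k) x\<bar> \<partial>M) = ennreal (\<integral>x. \<bar>E n x - E (ns k) x\<bar> \<partial>M)"
          by (rule nn_integral_eq_integral) (use Ei in auto)
        also have "\<dots> \<le> ennreal (\<delta> n)" by (rule ennreal_leI) (rule L1c[OF nk])
        finally show "(\<integral>\<^sup>+x. ennreal \<bar>E n x - E (ns k) x\<bar> \<partial>M) \<le> ennreal (\<delta> n)" .
      qed
    qed simp
    finally show ?thesis .
  qed
  have Egi: "integrable M (\<lambda>x. E n x - g x)" for n
    unfolding integrable_iff_bounded
  proof
    show "(\<lambda>x. E n x - g x) \<in> borel_measurable M" by simp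
    show "(\<integral>\<^sup>+x. ennreal (norm (E n x - g x)) \<partial>M) < \<infinity>"
      using fatou[of n] by (simp add: order_le_less_trans)
  qed
  have gi: "integrable M g"
  proof -
    have "integrable M (\<lambda>x. E 0 x - (E 0 x - g x))" by (rule Bochner_Integration.integrable_diff[OF Ei Egi])
    then show ?thesis by simp
  qed
  have Eg_le: "(\<integral>x. \<bar>E n x - g x\<bar> \<partial>M) \<le> \<delta> n" for n
  proof -
    have "ennreal (\<integral>x. \<bar>E n x - g x\<bar> \<partial>M) = (\<integral>\<^sup>+x. ennreal \<bar>E n x - g x\<bar> \<partial>M)"
      by (rule nn_integral_eq_integral[symmetric]) (use Egi in auto)
    then have "ennreal (\<integral>x. \<bar>E n x - g x\<bar> \<partial>M) \<le> ennreal (\<delta> n)" using fatou[of n] by simp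
    then show ?thesis using \<delta>_nonneg[of n] ennreal_le_iff by blast
  qed
  have Eg0: "(\<lambda>n. \<integral>x. \<bar>E n x - g x\<bar> \<partial>M) \<longlonglongrightarrow> 0"
    by (rule real_tendsto_sandwich[OF _ _ tendsto_const \<delta>0]) (auto intro!: always_eventually Eg_le)
  have gint: "(\<integral>x\<in>C. g x \<partial>M) = (\<integral>x\<in>C. f x \<partial>M)" if C: "C \<in> Sigma_infty M \<phi>" for C
  proof -
    have CS: "C \<in> sets (S n)" for n using C unfolding Sigma_infty_def sets_S by auto
    have Cs: "C \<in> sets M" using CS[of 0] subalg_S[of 0] unfolding subalgebra_def by auto
    have b: "\<bar>(\<integral>x\<in>C. f x \<partial>M) - (\<integral>x\<in>C. g x \<partial>M)\<bar> \<le> (\<integral>x. \<bar>E n x - g x\<bar> \<partial>M)" for n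
    proof -
      have "(\<integral>x\<in>C. f x \<partial>M) = (\<integral>x\<in>C. E n x \<partial>M)" unfolding E_def
        by (rule sigma_finite_subalgebra.real_cond_exp_intA[OF sfs_S fi CS])
      then have "(\<integral>x\<in>C. f x \<partial>M) - (\<integral>x\<in>C. g x \<partial>M) = (\<integral>x\<in>C. E n x - g x \<partial>M)"
        using setint_diff[OF Cs Ei gi] by simp
      also have "\<dots> = (\<integral>x. indicator C x * (E n x - g x) \<partial>M)"
        unfolding set_lebesgue_integral_def by simp
      finally have "\<bar>(\<integral>x\<in>C. f x \<partial>M) - (\<integral>x\<in>C. g x \<partial>M)\<bar> \<le> (\<integral>x. \<bar>indicator C x * (E n x - g x)\<bar> \<partial>M)"
        using integral_abs_bound by metis
      also have "\<dots> \<le> (\<integral>x. \<bar>E n x - g x\<bar> \<partial>M)"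
        by (rule integral_mono[OF integrable_abs[OF integrable_ind_mult[OF Cs Egi]] integrable_abs[OF Egi]])
          (auto split: split_indicator)
      finally show ?thesis .
    qed
    have "\<bar>(\<integral>x\<in>C. f x \<partial>M) - (\<integral>x\<in>C. g x \<partial>M)\<bar> \<le> 0"
      by (rule LIMSEQ_le_const[OF Eg0]) (use b in auto)
    then show ?thesis by simp
  qed
  define h where "h = real_cond_exp M Inv f"
  have hInv: "h \<in> borel_measurable Inv" unfolding h_def by simp
  have hS: "h \<in> borel_measurable (S m)" for m by (rule measurable_from_subalg[OF subalg_SInv hInv])
  have hi: "integrable M h" unfolding h_def using sigma_finite_subalgebra.real_cond_exp_int(1)[OF sfs_Inv fi] .
  have hM[measurable]: "h \<in> borel_measurable M" using hi by auto
  have hint: "(\<integral>x\<in>C. h x \<partial>M) = (\<integral>x\<in>C. f x \<partial>M)" if C: "C \<in> Sigma_inv M \<phi>" for C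
  proof -
    have "C \<in> sets Inv" unfolding sets_Inv using C by auto
    then show ?thesis unfolding h_def
      by (rule sigma_finite_subalgebra.real_cond_exp_intA[OF sfs_Inv fi, symmetric])
  qed
  have gC: "(\<integral>x\<in>C. g x \<partial>M) = (\<integral>x\<in>C. f x \<partial>M)" if "C \<in> Sigma_inv M \<phi>" for C
    using gint Sigma_inv_infty that by auto
  have "AE x in M. g x \<le> h x"
    by (rule ae_le_III[OF III gi hi gS hS]) (simp add: gC hint)
  moreover have "AE x in M. h x \<le> g x"
    by (rule ae_le_III[OF III hi gi hS gS]) (simp add: gC hint)
  ultimately have gh: "AE x in M. g x = h x" by eventually_elim auto
  have eqn: "(\<integral>x. \<bar>(P ^^ n) f x - h x\<bar> \<partial>M) = (\<integral>x. \<bar>E n x - g x\<bar> \<partial>M)" for n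
  proof -
    have Pm[measurable]: "(P ^^ n) f \<in> borel_measurable M" using Pn_integrable[OF fi] by auto
    have "(\<integral>x. \<bar>(P ^^ n) f x - h x\<bar> \<partial>M) = (\<integral>x. \<bar>(P ^^ n) f ((\<phi> ^^ n) x) - h ((\<phi> ^^ n) x)\<bar> \<partial>M)"
      by (rule integral_phin[of "\<lambda>y. \<bar>(P ^^ n) f y - h y\<bar>", symmetric]) simp
    also have "\<dots> = (\<integral>x. \<bar>(P ^^ n) f ((\<phi> ^^ n) x) - h x\<bar> \<partial>M)"
      by (rule Bochner_Integration.integral_cong) (auto simp: inv_funn[OF hInv])
    also have "\<dots> = (\<integral>x. \<bar>E n x - g x\<bar> \<partial>M)"
    proof (rule integral_cong_AE)
      show "AE x in M. \<bar>(P ^^ n) f ((\<phi> ^^ n) x) - h x\<bar> = \<bar>E n x - g x\<bar>"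
        using PE[OF fi, of n] gh by eventually_elim (simp add: E_def)
    qed simp_all
    finally show ?thesis .
  qed
  show ?thesis unfolding h_def[symmetric] eqn by (rule Eg0)
qed

end

lemma tri3:
  fixes a b c d :: "'a \<Rightarrow> real"
  assumes "integrable M a" "integrable M b" "integrable M c" "integrable M d"
  shows "(\<integral>x. \<bar>a x - d x\<bar> \<partial>M) \<le> (\<integral>x. \<bar>a x - b x\<bar> \<partial>M) + (\<integral>x. \<bar>b x - c x\<bar> \<partial>M) + (\<integral>x. \<bar>c x - d x\<bar> \<partial>M)"
proof -
  have "(\<integral>x. \<bar>a x - d x\<bar> \<partial>M) \<le> (\<integral>x. \<bar>a x - b x\<bar> + \<bar>b x - c x\<bar> + \<bar>c x - d x\<bar> \<partial>M)"
    by (rule integral_mono) (use assms in auto)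
  also have "\<dots> = (\<integral>x. \<bar>a x - b x\<bar> + \<bar>b x - c x\<bar> \<partial>M) + (\<integral>x. \<bar>c x - d x\<bar> \<partial>M)"
    by (rule Bochner_Integration.integral_add) (use assms in auto)
  also have "(\<integral>x. \<bar>a x - b x\<bar> + \<bar>b x - c x\<bar> \<partial>M) = (\<integral>x. \<bar>a x - b x\<bar> \<partial>M) + (\<integral>x. \<bar>b x - c x\<bar> \<partial>M)"
    by (rule Bochner_Integration.integral_add) (use assms in auto)
  finally show ?thesis .
qed

context pfs
begin

lemma cond_contr:
  fixes f g :: "'a \<Rightarrow> real"
  assumes f: "integrable M f" and g: "integrable M g"
  shows "(\<integral>x. \<bar>real_cond_exp M Inv f x - real_cond_exp M Inv g x\<bar> \<partial>M) \<le> (\<integral>x. \<bar>f x - g x\<bar> \<partial>M)"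
proof -
  interpret I: sigma_finite_subalgebra M Inv by (rule sfs_Inv)
  define w where "w x = real_cond_exp M Inv f x - real_cond_exp M Inv g x" for x
  define B where "B = {x\<in>space M. 0 \<le> w x}"
  have fi: "integrable M (real_cond_exp M Inv f)" "integrable M (real_cond_exp M Inv g)"
    using I.real_cond_exp_int(1) f g by auto
  have wi: "integrable M w" unfolding w_def using fi by auto
  have "{x\<in>space Inv. 0 \<le> w x} \<in> sets Inv" unfolding w_def by measurable
  then have BI: "B \<in> sets Inv" unfolding B_def by simp
  have BcI: "space M - B \<in> sets Inv" using sets.compl_sets[OF BI] by simp
  have Bs: "B \<in> sets M" "space M - B \<in> sets M" using BI BcI subalg_Inv unfolding subalgebra_def by auto
  have eq: "(\<integral>x\<in>A. w x \<partial>M) = (\<integral>x\<in>A. f x - g x \<partial>M)" if A: "A \<in> sets Inv" for A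
  proof -
    have As: "A \<in> sets M" using A subalg_Inv unfolding subalgebra_def by auto
    show ?thesis unfolding w_def
      using setint_diff[OF As fi] setint_diff[OF As f g]
        I.real_cond_exp_intA[OF f A] I.real_cond_exp_intA[OF g A] by simp
  qed
  have "(\<integral>x. \<bar>w x\<bar> \<partial>M) \<le> (\<integral>x. \<bar>f x - g x\<bar> \<partial>M)"
    by (rule abs_int_le[OF wi _ Bs(1) B_def]) (use f g eq BI BcI in auto)
  then show ?thesis unfolding w_def by simp
qed

lemma conv_all:
  fixes f :: "'a \<Rightarrow> real"
  assumes III: "completion_within M (Sigma_infty M \<phi>) = completion_within M (Sigma_inv M \<phi>)"
    and fi: "integrable M f"
  shows "(\<lambda>n. \<integral>x. \<bar>(P ^^ n) f x - real_cond_exp M Inv f x\<bar> \<partial>M) \<longlonglongrightarrow> 0"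
proof (rule LIMSEQ_I)
  fix r :: real assume r: "0 < r"
  have fm[measurable]: "f \<in> borel_measurable M" using fi by auto
  define tr where "tr k x = max (- real k) (min (real k) (f x))" for k x
  have trm[measurable]: "tr k \<in> borel_measurable M" for k unfolding tr_def by measurable
  have trb: "\<bar>tr k x\<bar> \<le> real k" for k x unfolding tr_def by auto
  have tri: "integrable M (tr k)" for k
    by (rule bounded_integrable[OF finite_measure_axioms trm]) (use trb in auto)
  have "(\<lambda>k. \<integral>x. \<bar>f x - tr k x\<bar> \<partial>M) \<longlonglongrightarrow> (\<integral>x. 0 \<partial>M)"
  proof (rule integral_dominated_convergence[where w="\<lambda>x. \<bar>f x\<bar>"])
    show "AE x in M. (\<lambda>k. \<bar>f x - tr k x\<bar>) \<longlonglongrightarrow> 0"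
    proof (rule AE_I2)
      fix x
      obtain K :: nat where K: "\<bar>f x\<bar> \<le> real K" using real_arch_simple by blast
      have "\<bar>f x - tr k x\<bar> = 0" if "K \<le> k" for k
        using K that unfolding tr_def by (auto simp: max_def min_def)
      then show "(\<lambda>k. \<bar>f x - tr k x\<bar>) \<longlonglongrightarrow> 0"
        by (intro tendsto_eventually eventually_sequentiallyI[of K]) auto
    qed
    show "AE x in M. norm \<bar>f x - tr k x\<bar> \<le> \<bar>f x\<bar>" for k
      by (rule AE_I2) (auto simp: tr_def max_def min_def)
  qed (use fi in auto)
  then have "(\<lambda>k. \<integral>x. \<bar>f x - tr k x\<bar> \<partial>M) \<longlonglongrightarrow> 0" by simp
  from LIMSEQ_D[OF this, of "r/3"] r obtain k where k: "\<bar>\<integral>x. \<bar>f x - tr k x\<bar> \<partial>M\<bar> < r/3"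
    by auto
  then have k': "(\<integral>x. \<bar>f x - tr k x\<bar> \<partial>M) < r/3" by simp
  from LIMSEQ_D[OF conv_bounded[OF III trm[of k] trb], of "r/3"] r obtain N where
    N: "\<And>n. N \<le> n \<Longrightarrow> \<bar>\<integral>x. \<bar>(P ^^ n) (tr k) x - real_cond_exp M Inv (tr k) x\<bar> \<partial>M\<bar> < r/3"
    by auto
  show "\<exists>no. \<forall>n\<ge>no. norm ((\<integral>x. \<bar>(P ^^ n) f x - real_cond_exp M Inv f x\<bar> \<partial>M) - 0) < r"
  proof (intro exI allI impI)
    fix n assume n: "N \<le> n"
    have i1: "integrable M ((P ^^ n) f)" "integrable M ((P ^^ n) (tr k))"
      using Pn_integrable fi tri by auto
    have i2: "integrable M (real_cond_exp M Inv (tr k))" "integrable M (real_cond_exp M Inv f)"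
      using sigma_finite_subalgebra.real_cond_exp_int(1)[OF sfs_Inv] fi tri by auto
    have "(\<integral>x. \<bar>(P ^^ n) f x - real_cond_exp M Inv f x\<bar> \<partial>M)
      \<le> (\<integral>x. \<bar>(P ^^ n) f x - (P ^^ n) (tr k) x\<bar> \<partial>M)
       + (\<integral>x. \<bar>(P ^^ n) (tr k) x - real_cond_exp M Inv (tr k) x\<bar> \<partial>M)
       + (\<integral>x. \<bar>real_cond_exp M Inv (tr k) x - real_cond_exp M Inv f x\<bar> \<partial>M)"
      by (rule tri3) (use i1 i2 in auto)
    also have "(\<integral>x. \<bar>(P ^^ n) f x - (P ^^ n) (tr k) x\<bar> \<partial>M) \<le> (\<integral>x. \<bar>f x - tr k x\<bar> \<partial>M)"
      by (rule contraction[OF fi tri])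
    also have "(\<integral>x. \<bar>real_cond_exp M Inv (tr k) x - real_cond_exp M Inv f x\<bar> \<partial>M) \<le> (\<integral>x. \<bar>tr k x - f x\<bar> \<partial>M)"
      by (rule cond_contr[OF tri fi])
    also have "(\<integral>x. \<bar>tr k x - f x\<bar> \<partial>M) = (\<integral>x. \<bar>f x - tr k x\<bar> \<partial>M)"
      by (simp add: abs_minus_commute)
    finally have "(\<integral>x. \<bar>(P ^^ n) f x - real_cond_exp M Inv f x\<bar> \<partial>M) < r"
      using k' N[OF n] by simp
    then show "norm ((\<integral>x. \<bar>(P ^^ n) f x - real_cond_exp M Inv f x\<bar> \<partial>M) - 0) < r" by simp
  qed
qed

end

context pfs
begin

lemma pre_null: "N \<in> null_sets M \<Longrightarrow> (\<phi> ^^ n) -` N \<inter> space M \<in> null_sets M"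
proof -
  assume N: "N \<in> null_sets M"
  then have Ns: "N \<in> sets M" by auto
  have "(\<phi> ^^ n) -` N \<inter> space M \<in> sets M" using Ns by measurable
  moreover have "emeasure M ((\<phi> ^^ n) -` N \<inter> space M) = 0" using emeasure_pre[OF Ns] N by auto
  ultimately show ?thesis by auto
qed

lemma almost_inv:
  assumes As: "A \<in> sets M"
    and N0: "((\<phi> -` A \<inter> space M) - A) \<union> (A - (\<phi> -` A \<inter> space M)) \<in> null_sets M"
  shows "\<exists>A'\<in>Sigma_inv M \<phi>. measure M ((A - A') \<union> (A' - A)) = 0"
proof -
  define N where "N n = (((\<phi> ^^ n) -` A \<inter> space M) - A) \<union> (A - ((\<phi> ^^ n) -` A \<inter> space M))" for n
  have Nn: "N n \<in> null_sets M" for n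
  proof (induction n)
    case 0 then show ?case using sets.sets_into_space[OF As] by (simp add: N_def Int_absorb2)
  next
    case (Suc n)
    have "N (Suc n) \<subseteq> ((\<phi> ^^ n) -` (((\<phi> -` A \<inter> space M) - A) \<union> (A - (\<phi> -` A \<inter> space M))) \<inter> space M) \<union> N n"
      unfolding N_def using phin_space by auto
    moreover have "N (Suc n) \<in> sets M" unfolding N_def using As by measurable
    ultimately show ?case using pre_null[OF N0, of n] Suc by (meson null_sets.Un null_sets_subset)
  qed
  define A' where "A' = (\<Inter>K. \<Union>n. (\<phi> ^^ (n + K)) -` A \<inter> space M)"
  have A'_iff: "x \<in> A' \<longleftrightarrow> x \<in> space M \<and> (\<forall>K. \<exists>n. (\<phi> ^^ (n + K)) x \<in> A)" for x
    unfolding A'_def by auto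
  have A's: "A' \<in> sets M" unfolding A'_def using As by measurable
  have A'inv: "\<phi> -` A' \<inter> space M = A'"
  proof (intro set_eqI iffI)
    fix x assume "x \<in> \<phi> -` A' \<inter> space M"
    then have x: "x \<in> space M" and h: "\<forall>K. \<exists>n. (\<phi> ^^ (n + K)) (\<phi> x) \<in> A"
      using A'_iff phi_space by auto
    have "\<exists>n. (\<phi> ^^ (n + K)) x \<in> A" for K
    proof -
      obtain n where "(\<phi> ^^ (n + K)) (\<phi> x) \<in> A" using h by blast
      then have "(\<phi> ^^ (Suc n + K)) x \<in> A" by (simp add: funpow_Suc_right del: funpow.simps)
      then show ?thesis by blast
    qed
    then show "x \<in> A'" using x A'_iff by auto
  next
    fix x assume "x \<in> A'"
    then have x: "x \<in> space M" and h: "\<forall>K. \<exists>n. (\<phi> ^^ (n + K)) x \<in> A" using A'_iff by auto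
    have "\<exists>n. (\<phi> ^^ (n + K)) (\<phi> x) \<in> A" for K
    proof -
      obtain n where "(\<phi> ^^ (n + Suc K)) x \<in> A" using h by blast
      then have "(\<phi> ^^ (n + K)) (\<phi> x) \<in> A" by (simp add: funpow_Suc_right del: funpow.simps)
      then show ?thesis by blast
    qed
    then show "x \<in> \<phi> -` A' \<inter> space M" using x phi_space A'_iff by auto
  qed
  have A'inv2: "A' \<in> Sigma_inv M \<phi>" unfolding Sigma_inv_def using A's A'inv by auto
  have sub: "(A - A') \<union> (A' - A) \<subseteq> (\<Union>n. N n)"
  proof
    fix x assume "x \<in> (A - A') \<union> (A' - A)"
    then consider "x \<in> A" "x \<notin> A'" | "x \<in> A'" "x \<notin> A" by blast
    then show "x \<in> (\<Union>n. N n)"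
    proof cases
      case 1
      then have x: "x \<in> space M" using As sets.sets_into_space by auto
      with 1 A'_iff obtain K where "\<forall>n. (\<phi> ^^ (n + K)) x \<notin> A" by auto
      then have "(\<phi> ^^ K) x \<notin> A" by (metis add_0)
      then have "x \<in> N K" unfolding N_def using 1 x by auto
      then show ?thesis by auto
    next
      case 2
      then obtain n where "(\<phi> ^^ (n + 0)) x \<in> A" and x: "x \<in> space M" using A'_iff by blast
      then have "x \<in> N n" unfolding N_def using 2 by auto
      then show ?thesis by auto
    qed
  qed
  have "(\<Union>n. N n) \<in> null_sets M" using Nn by auto
  moreover have "(A - A') \<union> (A' - A) \<in> sets M" using As A's by auto
  ultimately have "(A - A') \<union> (A' - A) \<in> null_sets M" using sub null_sets_subset by blast
  then have "measure M ((A - A') \<union> (A' - A)) = 0" by (simp add: measure_def null_setsD1)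
  then show ?thesis using A'inv2 by blast
qed

lemma III_of:
  assumes h: "\<And>A. A \<in> Sigma_infty M \<phi> \<Longrightarrow> \<exists>A'\<in>Sigma_inv M \<phi>. measure M ((A - A') \<union> (A' - A)) = 0"
  shows "completion_within M (Sigma_infty M \<phi>) = completion_within M (Sigma_inv M \<phi>)"
proof
  show "completion_within M (Sigma_inv M \<phi>) \<subseteq> completion_within M (Sigma_infty M \<phi>)"
    unfolding completion_within_def using Sigma_inv_infty by blast
  show "completion_within M (Sigma_infty M \<phi>) \<subseteq> completion_within M (Sigma_inv M \<phi>)"
  proof
    fix X assume "X \<in> completion_within M (Sigma_infty M \<phi>)"
    then obtain B where X: "X \<in> sets M" and B: "B \<in> Sigma_infty M \<phi>" and d1: "measure M ((X - B) \<union> (B - X)) = 0"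
      unfolding completion_within_def by auto
    obtain B' where B': "B' \<in> Sigma_inv M \<phi>" and d2: "measure M ((B - B') \<union> (B' - B)) = 0"
      using h[OF B] by auto
    have Bs: "B \<in> sets M" using B unfolding Sigma_infty_def Sigma_n_def by auto
    have B's: "B' \<in> sets M" using B' unfolding Sigma_inv_def by auto
    have n1: "(X - B) \<union> (B - X) \<in> null_sets M" using d1 X Bs by (intro null_of_measure0) auto
    have n2: "(B - B') \<union> (B' - B) \<in> null_sets M" using d2 B's Bs by (intro null_of_measure0) auto
    have "(X - B') \<union> (B' - X) \<subseteq> ((X - B) \<union> (B - X)) \<union> ((B - B') \<union> (B' - B))" by auto
    moreover have "(X - B') \<union> (B' - X) \<in> sets M" using X B's by auto
    ultimately have "(X - B') \<union> (B' - X) \<in> null_sets M" using n1 n2 by (meson null_sets.Un null_sets_subset)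
    then have "measure M ((X - B') \<union> (B' - X)) = 0" by (simp add: measure_def null_setsD1)
    then show "X \<in> completion_within M (Sigma_inv M \<phi>)" unfolding completion_within_def using X B' by auto
  qed
qed

end

context pfs
begin

lemma ind_int: "A \<in> sets M \<Longrightarrow> integrable M (indicator A :: 'a \<Rightarrow> real)"
  by (rule bounded_integrable[OF finite_measure_axioms, of _ 1]) (auto simp: indicator_def)

lemma Q:
  fixes G :: "'a \<Rightarrow> real"
  assumes As: "A \<in> sets M" and B: "\<And>n. B n \<in> sets M" and AB: "\<And>n. A = (\<phi> ^^ n) -` B n \<inter> space M"
    and Gi: "integrable M G"
    and conv: "(\<lambda>n. \<integral>x. \<bar>indicator (B n) x - G x\<bar> \<partial>M) \<longlonglongrightarrow> 0"
  shows "((\<phi> -` A \<inter> space M) - A) \<union> (A - (\<phi> -` A \<inter> space M)) \<in> null_sets M"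
proof -
  have Gm[measurable]: "G \<in> borel_measurable M" using Gi by auto
  have Bm[measurable]: "B n \<in> sets M" for n using B by auto
  have Am[measurable]: "A \<in> sets M" using As .
  define t where "t n = (\<integral>x. \<bar>indicator A x - G ((\<phi> ^^ n) x)\<bar> \<partial>M)" for n
  have teq: "t n = (\<integral>x. \<bar>indicator (B n) x - G x\<bar> \<partial>M)" for n
  proof -
    have "t n = (\<integral>x. \<bar>indicator (B n) ((\<phi> ^^ n) x) - G ((\<phi> ^^ n) x)\<bar> \<partial>M)"
      unfolding t_def
    proof (rule Bochner_Integration.integral_cong)
      fix x assume x: "x \<in> space M"
      have "x \<in> A \<longleftrightarrow> (\<phi> ^^ n) x \<in> B n" using AB[of n] x by auto
      then show "\<bar>indicator A x - G ((\<phi> ^^ n) x)\<bar> = \<bar>indicator (B n) ((\<phi> ^^ n) x) - G ((\<phi> ^^ n) x)\<bar>"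
        by (simp add: indicator_def)
    qed simp
    also have "\<dots> = (\<integral>x. \<bar>indicator (B n) x - G x\<bar> \<partial>M)"
      by (rule integral_phin[of "\<lambda>y. \<bar>indicator (B n) y - G y\<bar>"]) simp
    finally show ?thesis .
  qed
  have t0: "t \<longlonglongrightarrow> 0" unfolding teq using conv .
  have t_nonneg: "0 \<le> t n" for n unfolding t_def by (rule Bochner_Integration.integral_nonneg) simp
  have Gphi: "integrable M (\<lambda>x. G ((\<phi> ^^ n) x))" for n using integrable_phin[OF Gi] .
  have Gphi': "integrable M (\<lambda>x. G (\<phi> ((\<phi> ^^ n) x)))" for n using Gphi[of "Suc n"] by simp
  have indi: "integrable M (indicator A :: 'a \<Rightarrow> real)" using As by (rule ind_int)
  define m0 where "m0 = (\<integral>x. \<bar>G (\<phi> x) - G x\<bar> \<partial>M)"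
  have m0eq: "m0 = (\<integral>x. \<bar>G ((\<phi> ^^ Suc n) x) - G ((\<phi> ^^ n) x)\<bar> \<partial>M)" for n
    unfolding m0_def using integral_phin[of "\<lambda>y. \<bar>G (\<phi> y) - G y\<bar>" n] by simp
  have m0le: "m0 \<le> t (Suc n) + t n" for n
  proof -
    have "m0 \<le> (\<integral>x. \<bar>indicator A x - G ((\<phi> ^^ Suc n) x)\<bar> + \<bar>indicator A x - G ((\<phi> ^^ n) x)\<bar> \<partial>M)"
      unfolding m0eq[of n] by (rule integral_mono) (use Gphi Gphi' indi in auto)
    also have "\<dots> = t (Suc n) + t n" unfolding t_def
      by (rule Bochner_Integration.integral_add) (use Gphi Gphi' indi in auto)
    finally show ?thesis .
  qed
  have "(\<lambda>n. t (Suc n) + t n) \<longlonglongrightarrow> 0 + 0"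
    by (intro tendsto_add t0) (rule LIMSEQ_Suc[OF t0])
  then have m0_le0: "m0 \<le> 0" by (intro LIMSEQ_le_const) (use m0le in auto)
  define d where "d = (\<integral>x. \<bar>indicator A (\<phi> x) - indicator A x\<bar> \<partial>M :: real)"
  have dle: "d \<le> t n + m0 + t n" for n
  proof -
    have i1: "integrable M (\<lambda>x. indicator A (\<phi> x) :: real)"
      using integrable_phin[OF indi, of 1] by simp
    have "d \<le> (\<integral>x. \<bar>indicator A (\<phi> x) - G ((\<phi> ^^ Suc n) x)\<bar> \<partial>M)
        + (\<integral>x. \<bar>G ((\<phi> ^^ Suc n) x) - G ((\<phi> ^^ n) x)\<bar> \<partial>M)
        + (\<integral>x. \<bar>G ((\<phi> ^^ n) x) - indicator A x\<bar> \<partial>M)"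
      unfolding d_def by (rule tri3[OF i1 Gphi Gphi indi])
    also have "(\<integral>x. \<bar>indicator A (\<phi> x) - G ((\<phi> ^^ Suc n) x)\<bar> \<partial>M) = t n"
    proof -
      have "(\<integral>x. \<bar>indicator A (\<phi> x) - G ((\<phi> ^^ Suc n) x)\<bar> \<partial>M)
          = (\<integral>x. \<bar>indicator A ((\<phi> ^^ 1) x) - G ((\<phi> ^^ n) ((\<phi> ^^ 1) x))\<bar> \<partial>M)"
        by (simp add: funpow_Suc_right del: funpow.simps)
      also have "\<dots> = t n" unfolding t_def
        by (rule integral_phin[of "\<lambda>y. \<bar>indicator A y - G ((\<phi> ^^ n) y)\<bar>"]) simp
      finally show ?thesis .
    qed
    also have "(\<integral>x. \<bar>G ((\<phi> ^^ n) x) - indicator A x\<bar> \<partial>M) = t n"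
      unfolding t_def by (simp add: abs_minus_commute)
    finally show ?thesis using m0eq[of n] by simp
  qed
  have "(\<lambda>n. t n + m0 + t n) \<longlonglongrightarrow> 0 + m0 + 0" by (intro tendsto_intros t0)
  then have "d \<le> 0 + m0 + 0" by (intro LIMSEQ_le_const) (use dle in auto)
  then have d0: "d \<le> 0" using m0_le0 by simp
  define SD where "SD = ((\<phi> -` A \<inter> space M) - A) \<union> (A - (\<phi> -` A \<inter> space M))"
  have SDs: "SD \<in> sets M" unfolding SD_def using As by measurable
  have "d = (\<integral>x. indicator SD x \<partial>M)" unfolding d_def
    by (rule Bochner_Integration.integral_cong) (auto simp: SD_def indicator_def)
  also have "\<dots> = measure M SD" using SDs sets.sets_into_space by (simp add: Int_absorb2)
  finally have "measure M SD = 0" using d0 by (simp add: antisym)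
  then show ?thesis unfolding SD_def[symmetric] using SDs null_of_measure0 by blast
qed

lemma Sigma_infty_B:
  assumes "A \<in> Sigma_infty M \<phi>"
  obtains B where "\<And>n. B n \<in> sets M" "\<And>n. A = (\<phi> ^^ n) -` B n \<inter> space M"
proof -
  have "\<forall>n. \<exists>C. C \<in> sets M \<and> A = (\<phi> ^^ n) -` C \<inter> space M"
    using assms unfolding Sigma_infty_def Sigma_n_def by blast
  then obtain B where "\<And>n. B n \<in> sets M \<and> A = (\<phi> ^^ n) -` B n \<inter> space M" by metis
  then show ?thesis using that by blast
qed

lemma setint_ind: "C \<in> sets M \<Longrightarrow> D \<in> sets M \<Longrightarrow> (\<integral>x\<in>C. indicator D x \<partial>M) = measure M (C \<inter> D)"
  unfolding set_lebesgue_integral_def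
  using sets.sets_into_space[of C M]
  by (simp add: indicator_inter_arith[symmetric] Int_absorb2 Int_assoc[symmetric] Int_commute)

lemma II_III:
  assumes II: "\<forall>f. integrable M f \<longrightarrow> (\<exists>g. conv_L1 M (\<lambda>n. (P ^^ n) f) g)"
  shows "completion_within M (Sigma_infty M \<phi>) = completion_within M (Sigma_inv M \<phi>)"
proof (rule III_of)
  fix A assume A: "A \<in> Sigma_infty M \<phi>"
  obtain B where B: "\<And>n. B n \<in> sets M" and AB: "\<And>n. A = (\<phi> ^^ n) -` B n \<inter> space M"
    using Sigma_infty_B[OF A] by blast
  have As: "A \<in> sets M" using AB[of 0] B[of 0] by simp
  have indi: "integrable M (indicator A :: 'a \<Rightarrow> real)" using As by (rule ind_int)
  obtain G where Gi: "integrable M G" and conv: "(\<lambda>n. \<integral>x. \<bar>(P ^^ n) (indicator A) x - G x\<bar> \<partial>M) \<longlonglongrightarrow> 0"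
    using II indi unfolding conv_L1_def by blast
  have ae: "AE x in M. (P ^^ n) (indicator A) x - indicator (B n) x = 0" for n
  proof (rule zero_setint)
    show "integrable M (\<lambda>x. (P ^^ n) (indicator A) x - indicator (B n) x)"
      by (intro Bochner_Integration.integrable_diff Pn_integrable[OF indi] ind_int B)
    fix C assume C: "C \<in> sets M"
    have pre: "(\<phi> ^^ n) -` C \<inter> space M \<in> sets M" using C by measurable
    have e: "(\<phi> ^^ n) -` C \<inter> space M \<inter> A = (\<phi> ^^ n) -` (C \<inter> B n) \<inter> space M" using AB[of n] by auto
    have "(\<integral>x\<in>C. (P ^^ n) (indicator A) x - indicator (B n) x \<partial>M)
        = (\<integral>x\<in>C. (P ^^ n) (indicator A) x \<partial>M) - (\<integral>x\<in>C. indicator (B n) x \<partial>M)"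
      by (rule setint_diff[OF C Pn_integrable[OF indi] ind_int[OF B]])
    also have "\<dots> = measure M ((\<phi> ^^ n) -` C \<inter> space M \<inter> A) - measure M (C \<inter> B n)"
      using Pn_setint[OF indi C] setint_ind[OF pre As] setint_ind[OF C B] by simp
    also have "\<dots> = 0" unfolding e using measure_pre[of "C \<inter> B n" n] C B by simp
    finally show "(\<integral>x\<in>C. (P ^^ n) (indicator A) x - indicator (B n) x \<partial>M) = 0" .
  qed
  have "(\<lambda>n. \<integral>x. \<bar>indicator (B n) x - G x\<bar> \<partial>M) \<longlonglongrightarrow> 0"
  proof -
    have "(\<integral>x. \<bar>(P ^^ n) (indicator A) x - G x\<bar> \<partial>M) = (\<integral>x. \<bar>indicator (B n) x - G x\<bar> \<partial>M)" for n
    proof (rule integral_cong_AE)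
      show "AE x in M. \<bar>(P ^^ n) (indicator A) x - G x\<bar> = \<bar>indicator (B n) x - G x\<bar>"
        using ae[of n] by eventually_elim simp
      show "(\<lambda>x. \<bar>(P ^^ n) (indicator A) x - G x\<bar>) \<in> borel_measurable M"
        using Pn_integrable[OF indi] Gi by auto
      show "(\<lambda>x. \<bar>indicator (B n) x - G x\<bar>) \<in> borel_measurable M" using Gi B by auto
    qed
    then show ?thesis using conv by simp
  qed
  from Q[OF As B AB Gi this] show "\<exists>A'\<in>Sigma_inv M \<phi>. measure M ((A - A') \<union> (A' - A)) = 0"
    by (rule almost_inv[OF As])
qed

end

context pfs
begin

lemma img_sets: "X \<in> sets M \<Longrightarrow> (\<phi> ^^ n) ` X \<in> sets M"
proof (induction n)
  case 0 then show ?case by simp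
next
  case (Suc n)
  have "(\<phi> ^^ Suc n) ` X = \<phi> ` ((\<phi> ^^ n) ` X)" by (simp add: image_comp)
  then show ?case using bm Suc unfolding bimeasurable_def by auto
qed

lemma img_space: "X \<subseteq> space M \<Longrightarrow> (\<phi> ^^ n) ` X \<subseteq> space M"
  using phin_space by auto

lemma img_null: "space M - (\<phi> ^^ n) ` space M \<in> null_sets M"
proof -
  have Is: "(\<phi> ^^ n) ` space M \<in> sets M" by (rule img_sets) simp
  have "(\<phi> ^^ n) -` ((\<phi> ^^ n) ` space M) \<inter> space M = space M" by auto
  then have "emeasure M ((\<phi> ^^ n) ` space M) = emeasure M (space M)"
    using emeasure_pre[OF Is, of n] by simp
  then have m1: "measure M ((\<phi> ^^ n) ` space M) = 1" by (simp add: measure_def emeasure_space_1)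
  have "measure M (space M - (\<phi> ^^ n) ` space M) = 0"
    using prob_compl[OF Is] m1 by simp
  then show ?thesis using Is by (intro null_of_measure0) auto
qed

lemma I_III:
  assumes I: "\<forall>A\<in>sets M. \<exists>B. conv_measure_algebra M (\<lambda>n. (\<phi> ^^ n) ` A) B"
  shows "completion_within M (Sigma_infty M \<phi>) = completion_within M (Sigma_inv M \<phi>)"
proof (rule III_of)
  fix A assume A: "A \<in> Sigma_infty M \<phi>"
  obtain B where B: "\<And>n. B n \<in> sets M" and AB: "\<And>n. A = (\<phi> ^^ n) -` B n \<inter> space M"
    using Sigma_infty_B[OF A] by blast
  have As: "A \<in> sets M" using AB[of 0] B[of 0] by simp
  obtain B' where B's: "B' \<in> sets M"
    and conv: "(\<lambda>n. measure M (((\<phi> ^^ n) ` A - B') \<union> (B' - (\<phi> ^^ n) ` A))) \<longlonglongrightarrow> 0"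
    using I As unfolding conv_measure_algebra_def by blast
  have eq: "(\<integral>x. \<bar>indicator (B n) x - indicator B' x\<bar> \<partial>M :: real)
      = measure M (((\<phi> ^^ n) ` A - B') \<union> (B' - (\<phi> ^^ n) ` A))" for n
  proof -
    have imgA: "(\<phi> ^^ n) ` A = B n \<inter> (\<phi> ^^ n) ` space M" using AB[of n] by auto
    have Is: "(\<phi> ^^ n) ` A \<in> sets M" using img_sets[OF As] .
    have ae: "AE x in M. x \<in> B n \<longleftrightarrow> x \<in> (\<phi> ^^ n) ` A"
      using AE_not_in[OF img_null[of n]] AE_space by eventually_elim (auto simp: imgA)
    have "(\<integral>x. \<bar>indicator (B n) x - indicator B' x\<bar> \<partial>M :: real)
        = (\<integral>x. \<bar>indicator ((\<phi> ^^ n) ` A) x - indicator B' x\<bar> \<partial>M)"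
      by (rule integral_cong_AE) (use ae B B's Is in \<open>auto simp: indicator_def\<close>)
    also have "\<dots> = (\<integral>x. indicator (((\<phi> ^^ n) ` A - B') \<union> (B' - (\<phi> ^^ n) ` A)) x \<partial>M)"
      by (rule Bochner_Integration.integral_cong) (auto simp: indicator_def)
    also have "\<dots> = measure M (((\<phi> ^^ n) ` A - B') \<union> (B' - (\<phi> ^^ n) ` A))"
      using Is B's sets.sets_into_space by (simp add: Int_absorb2)
    finally show ?thesis .
  qed
  have "(\<lambda>n. \<integral>x. \<bar>indicator (B n) x - indicator B' x\<bar> \<partial>M :: real) \<longlonglongrightarrow> 0"
    unfolding eq using conv .
  from Q[OF As B AB ind_int[OF B's] this] show "\<exists>A'\<in>Sigma_inv M \<phi>. measure M ((A - A') \<union> (A' - A)) = 0"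
    by (rule almost_inv[OF As])
qed

end

lemma (in finite_measure) union_conv:
  fixes D :: "nat \<Rightarrow> 'a set"
  assumes D: "\<And>i. D i \<in> sets M" and X: "\<And>n. X n \<in> sets M"
    and c: "\<And>i. (\<lambda>n. measure M (D i - X n)) \<longlonglongrightarrow> 0"
  shows "(\<lambda>n. measure M ((\<Union>i. D i) - X n)) \<longlonglongrightarrow> 0"
proof (rule LIMSEQ_I)
  fix r :: real assume r: "0 < r"
  define U where "U N = (\<Union>i<N. D i)" for N
  have Us: "U N \<in> sets M" for N unfolding U_def using D by auto
  have "incseq U" unfolding U_def incseq_def by (auto intro: order_less_le_trans)
  then have "(\<lambda>N. measure M (U N)) \<longlonglongrightarrow> measure M (\<Union>N. U N)"
    by (intro finite_Lim_measure_incseq) (use Us in auto)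
  moreover have "(\<Union>N. U N) = (\<Union>i. D i)" unfolding U_def by auto
  ultimately have "(\<lambda>N. measure M (U N)) \<longlonglongrightarrow> measure M (\<Union>i. D i)" by simp
  from LIMSEQ_D[OF this, of "r/2"] r obtain N where
    N: "\<bar>measure M (U N) - measure M (\<Union>i. D i)\<bar> < r/2" by auto
  have Gs: "(\<Union>i. D i) \<in> sets M" using D by auto
  have sub: "U N \<subseteq> (\<Union>i. D i)" unfolding U_def by auto
  have GU: "measure M ((\<Union>i. D i) - U N) < r/2"
  proof -
    have "measure M (\<Union>i. D i) - measure M (U N) < r/2" using N[unfolded abs_less_iff] by linarith
    then show ?thesis using finite_measure_Diff[OF Gs Us[of N] sub] by simp
  qed
  have "(\<lambda>n. \<Sum>i<N. measure M (D i - X n)) \<longlonglongrightarrow> 0" by (rule tendsto_null_sum) (rule c)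
  from LIMSEQ_D[OF this, of "r/2"] r obtain n0 where
    n0: "\<And>n. n0 \<le> n \<Longrightarrow> \<bar>\<Sum>i<N. measure M (D i - X n)\<bar> < r/2" by auto
  show "\<exists>no. \<forall>n\<ge>no. norm (measure M ((\<Union>i. D i) - X n) - 0) < r"
  proof (intro exI allI impI)
    fix n assume n: "n0 \<le> n"
    have "(\<Union>i. D i) - X n \<subseteq> ((\<Union>i. D i) - U N) \<union> (\<Union>i<N. D i - X n)" unfolding U_def by auto
    then have "measure M ((\<Union>i. D i) - X n) \<le> measure M (((\<Union>i. D i) - U N) \<union> (\<Union>i<N. D i - X n))"
      by (intro finite_measure_mono) (use D X Us in auto)
    also have "\<dots> \<le> measure M ((\<Union>i. D i) - U N) + measure M (\<Union>i<N. D i - X n)"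
      by (intro measure_Un_le) (use D X Us in auto)
    also have "measure M (\<Union>i<N. D i - X n) \<le> (\<Sum>i<N. measure M (D i - X n))"
      by (intro finite_measure_subadditive_finite) (use D X in auto)
    finally show "norm (measure M ((\<Union>i. D i) - X n) - 0) < r" using GU n0[OF n] by simp
  qed
qed

context pfs
begin

lemma K:
  assumes C: "\<forall>f. integrable M f \<longrightarrow> (\<lambda>n. \<integral>x. \<bar>(P ^^ n) f x - real_cond_exp M Inv f x\<bar> \<partial>M) \<longlonglongrightarrow> 0"
    and Ds: "D \<in> sets M"
  shows "(\<lambda>j. measure M (D - (\<phi> ^^ j) ` D)) \<longlonglongrightarrow> 0"
proof (rule LIMSEQ_I)
  fix r :: real assume r: "0 < r"
  interpret I: sigma_finite_subalgebra M Inv by (rule sfs_Inv)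
  have Dm[measurable]: "D \<in> sets M" using Ds .
  have indi: "integrable M (indicator D :: 'a \<Rightarrow> real)" by (rule ind_int[OF Ds])
  define h where "h = real_cond_exp M Inv (indicator D)"
  have hInv[measurable]: "h \<in> borel_measurable Inv" unfolding h_def by simp
  have hM[measurable]: "h \<in> borel_measurable M" unfolding h_def by simp
  have hi: "integrable M h" unfolding h_def using I.real_cond_exp_int(1)[OF indi] .
  have hpos: "AE x in M. 0 \<le> h x" unfolding h_def
    by (rule I.real_cond_exp_pos) (auto simp: indicator_def)
  define Z where "Z = {x\<in>space M. h x \<le> 0}"
  have ZI: "Z \<in> sets Inv" unfolding Z_def
  proof -
    have "{x\<in>space Inv. h x \<le> 0} \<in> sets Inv" by measurable
    then show "{x\<in>space M. h x \<le> 0} \<in> sets Inv" by simp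
  qed
  have Zs: "Z \<in> sets M" using ZI subalg_Inv unfolding subalgebra_def by auto
  have "measure M (Z \<inter> D) = (\<integral>x\<in>Z. indicator D x \<partial>M)" using setint_ind[OF Zs Ds] by simp
  also have "\<dots> = (\<integral>x\<in>Z. h x \<partial>M)" unfolding h_def by (rule I.real_cond_exp_intA[OF indi ZI])
  also have "\<dots> \<le> (\<integral>x. 0 \<partial>M)" unfolding set_lebesgue_integral_def
    by (rule integral_mono) (use integrable_ind_mult[OF Zs hi] in \<open>auto simp: Z_def indicator_def\<close>)
  also have "\<dots> = 0" by simp
  finally have ZD: "measure M (Z \<inter> D) = 0" by (simp add: antisym)
  define Y where "Y k = D \<inter> {x\<in>space M. h x < 1 / Suc k}" for k
  have Ys: "Y k \<in> sets M" for k unfolding Y_def by measurable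
  have "decseq Y" unfolding decseq_def Y_def
  proof (intro allI impI subsetI)
    fix m n :: nat and x assume mn: "m \<le> n" and x: "x \<in> D \<inter> {x \<in> space M. h x < 1 / Suc n}"
    have "1 / real (Suc n) \<le> 1 / real (Suc m)" using mn by (intro divide_left_mono) auto
    then show "x \<in> D \<inter> {x \<in> space M. h x < 1 / Suc m}" using x by auto
  qed
  then have "(\<lambda>k. measure M (Y k)) \<longlonglongrightarrow> measure M (\<Inter>k. Y k)"
    by (intro finite_Lim_measure_decseq) (use Ys in auto)
  moreover have "(\<Inter>k. Y k) = Z \<inter> D"
  proof (intro set_eqI iffI)
    fix x assume x: "x \<in> (\<Inter>k. Y k)"
    then have xD: "x \<in> D" "x \<in> space M" and hk: "\<And>k. h x < 1 / Suc k" unfolding Y_def by auto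
    have "h x \<le> 0"
    proof (rule ccontr)
      assume "\<not> h x \<le> 0"
      then have hp: "0 < h x" by simp
      obtain k :: nat where "1 / h x < real k" using reals_Archimedean2 by blast
      then have "1 / h x < real (Suc k)" by simp
      then have "1 < real (Suc k) * h x" using hp by (simp add: field_simps)
      then have "1 / Suc k < h x" using hp by (simp add: field_simps)
      then show False using hk[of k] by simp
    qed
    then show "x \<in> Z \<inter> D" using xD unfolding Z_def by auto
  next
    fix x assume "x \<in> Z \<inter> D"
    then show "x \<in> (\<Inter>k. Y k)" unfolding Y_def Z_def
      by (auto intro: order_le_less_trans[of _ 0])
  qed
  ultimately have "(\<lambda>k. measure M (Y k)) \<longlonglongrightarrow> 0" using ZD by simp
  from LIMSEQ_D[OF this, of "r/2"] r obtain k where k: "measure M (Y k) < r/2" by auto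
  have rk: "0 < r / (2 * Suc k)" using r by simp
  from LIMSEQ_D[OF C[rule_format, OF indi] rk] obtain J where
    J: "\<And>j. J \<le> j \<Longrightarrow> \<bar>\<integral>x. \<bar>(P ^^ j) (indicator D) x - h x\<bar> \<partial>M\<bar> < r / (2 * Suc k)"
    unfolding h_def by auto
  show "\<exists>no. \<forall>n\<ge>no. norm (measure M (D - (\<phi> ^^ n) ` D) - 0) < r"
  proof (intro exI allI impI)
    fix j assume j: "J \<le> j"
    define Cj where "Cj = D - (\<phi> ^^ j) ` D"
    have Cjs: "Cj \<in> sets M" unfolding Cj_def using img_sets[OF Ds] Ds by auto
    have pre: "(\<phi> ^^ j) -` Cj \<inter> space M \<in> sets M" using Cjs by measurable
    have emp: "(\<phi> ^^ j) -` Cj \<inter> space M \<inter> D = {}" unfolding Cj_def by auto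
    have P0: "(\<integral>x\<in>Cj. (P ^^ j) (indicator D) x \<partial>M) = 0"
      using Pn_setint[OF indi Cjs, of j] setint_ind[OF pre Ds] emp by simp
    have Pi: "integrable M ((P ^^ j) (indicator D))" using Pn_integrable[OF indi] .
    have "(\<integral>x\<in>Cj. h x \<partial>M) = (\<integral>x\<in>Cj. h x - (P ^^ j) (indicator D) x \<partial>M)"
      using setint_diff[OF Cjs hi Pi] P0 by simp
    also have "\<dots> = (\<integral>x. indicator Cj x * (h x - (P ^^ j) (indicator D) x) \<partial>M)"
      unfolding set_lebesgue_integral_def by simp
    also have "\<dots> \<le> (\<integral>x. \<bar>(P ^^ j) (indicator D) x - h x\<bar> \<partial>M)"
      by (rule integral_mono) (use hi Pi Cjs in \<open>auto split: split_indicator\<close>)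
    finally have hC: "(\<integral>x\<in>Cj. h x \<partial>M) < r / (2 * Suc k)" using J[OF j] by simp
    have "measure M Cj = (\<integral>x. indicator Cj x \<partial>M)" using Cjs sets.sets_into_space by (simp add: Int_absorb2)
    also have "\<dots> \<le> (\<integral>x. indicator (Y k) x + real (Suc k) * (indicator Cj x * h x) \<partial>M)"
    proof (rule integral_mono_AE)
      show "integrable M (\<lambda>x. indicator Cj x :: real)" using ind_int[OF Cjs] .
      show "integrable M (\<lambda>x. indicator (Y k) x + real (Suc k) * (indicator Cj x * h x))"
        using ind_int[OF Ys] integrable_ind_mult[OF Cjs hi] by auto
      show "AE x in M. indicator Cj x \<le> indicator (Y k) x + real (Suc k) * (indicator Cj x * h x)"
        using hpos AE_space
      proof eventually_elim
        case (elim x)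
        show ?case
        proof (cases "x \<in> Cj")
          case True
          then have xD: "x \<in> D" unfolding Cj_def by auto
          show ?thesis
          proof (cases "h x < 1 / Suc k")
            case True
            then have "x \<in> Y k" unfolding Y_def using xD elim by auto
            then show ?thesis using elim \<open>x \<in> Cj\<close> by (simp add: indicator_def)
          next
            case False
            then have "1 \<le> real (Suc k) * h x" by (simp add: field_simps)
            then show ?thesis using \<open>x \<in> Cj\<close> by (simp add: indicator_def)
          qed
        next
          case False
          then show ?thesis using elim by (simp add: indicator_def)
        qed
      qed
    qed
    also have "\<dots> = measure M (Y k) + real (Suc k) * (\<integral>x\<in>Cj. h x \<partial>M)"
      using ind_int[OF Ys] integrable_ind_mult[OF Cjs hi] Ys sets.sets_into_space
      by (simp add: set_lebesgue_integral_def Int_absorb2)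
    also have "\<dots> < r/2 + real (Suc k) * (r / (2 * Suc k))"
      using k hC by (intro add_strict_mono mult_strict_left_mono) auto
    also have "\<dots> = r" by (simp add: field_simps)
    finally show "norm (measure M (D - (\<phi> ^^ j) ` D) - 0) < r" unfolding Cj_def by simp
  qed
qed

end

context pfs
begin

lemma Astar:
  assumes C: "\<forall>f. integrable M f \<longrightarrow> (\<lambda>n. \<integral>x. \<bar>(P ^^ n) f x - real_cond_exp M Inv f x\<bar> \<partial>M) \<longlonglongrightarrow> 0"
    and As: "A \<in> sets M"
  shows "conv_measure_algebra M (\<lambda>n. (\<phi> ^^ n) ` A) (min_inv_superset M \<phi> A)"
proof -
  have Asp: "A \<subseteq> space M" using As sets.sets_into_space by auto
  define Dmk where "Dmk m k = (\<phi> ^^ m) -` ((\<phi> ^^ k) ` A) \<inter> space M" for m k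
  define G where "G = (\<Union>m. \<Union>k. Dmk m k)"
  have Dmks: "Dmk m k \<in> sets M" for m k unfolding Dmk_def using img_sets[OF As, of k] by measurable
  have Gs: "G \<in> sets M" unfolding G_def using Dmks by auto
  have Gsp: "G \<subseteq> space M" unfolding G_def Dmk_def by auto
  have AG: "A \<subseteq> G" unfolding G_def Dmk_def using Asp by (auto intro!: exI[of _ 0])
  have imgG: "(\<phi> ^^ n) ` A \<subseteq> G" for n
  proof
    fix y assume y: "y \<in> (\<phi> ^^ n) ` A"
    then have "y \<in> space M" using img_space[OF Asp] by auto
    then have "y \<in> Dmk 0 n" using y unfolding Dmk_def by simp
    then show "y \<in> G" unfolding G_def by blast
  qed
  have Ginv: "\<phi> -` G \<inter> space M = G"
  proof (intro set_eqI iffI)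
    fix x assume "x \<in> \<phi> -` G \<inter> space M"
    then obtain m k where x: "x \<in> space M" and "\<phi> x \<in> Dmk m k" unfolding G_def by auto
    then have "(\<phi> ^^ m) (\<phi> x) \<in> (\<phi> ^^ k) ` A" unfolding Dmk_def by auto
    then have "(\<phi> ^^ Suc m) x \<in> (\<phi> ^^ k) ` A" by (simp add: funpow_Suc_right del: funpow.simps)
    then have "x \<in> Dmk (Suc m) k" unfolding Dmk_def using x by auto
    then show "x \<in> G" unfolding G_def by blast
  next
    fix x assume "x \<in> G"
    then obtain m k where xD: "x \<in> Dmk m k" unfolding G_def by auto
    then have x: "x \<in> space M" and xm: "(\<phi> ^^ m) x \<in> (\<phi> ^^ k) ` A" unfolding Dmk_def by auto
    have "\<phi> x \<in> G"
    proof (cases m)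
      case 0
      then obtain a where a: "a \<in> A" "x = (\<phi> ^^ k) a" using xm by auto
      then have "\<phi> x = (\<phi> ^^ Suc k) a" by simp
      then have "\<phi> x \<in> (\<phi> ^^ Suc k) ` A" using a by blast
      then have "\<phi> x \<in> Dmk 0 (Suc k)" unfolding Dmk_def using phi_space[OF x] by simp
      then show ?thesis unfolding G_def by blast
    next
      case (Suc m')
      then have "(\<phi> ^^ m') (\<phi> x) \<in> (\<phi> ^^ k) ` A" using xm by (simp add: funpow_Suc_right del: funpow.simps)
      then have "\<phi> x \<in> Dmk m' k" unfolding Dmk_def using phi_space[OF x] by simp
      then show ?thesis unfolding G_def by blast
    qed
    then show "x \<in> \<phi> -` G \<inter> space M" using x by auto
  qed
  have mis: "min_inv_superset M \<phi> A = G"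
  proof
    show "min_inv_superset M \<phi> A \<subseteq> G" unfolding min_inv_superset_def
      by (rule Inter_lower) (use Gsp AG Ginv in auto)
    show "G \<subseteq> min_inv_superset M \<phi> A" unfolding min_inv_superset_def
    proof (rule Inter_greatest)
      fix B assume "B \<in> {B. B \<subseteq> space M \<and> A \<subseteq> B \<and> \<phi> -` B \<inter> space M = B}"
      then have Bsp: "B \<subseteq> space M" and AB: "A \<subseteq> B" and Binv: "\<phi> -` B \<inter> space M = B" by auto
      have fwd: "x \<in> B \<Longrightarrow> \<phi> x \<in> B" for x using Binv by blast
      have imgB: "(\<phi> ^^ k) ` A \<subseteq> B" for k
      proof (induction k)
        case 0 then show ?case using AB by simp
      next
        case (Suc k)
        then show ?case using fwd by auto
      qed
      have "Dmk m k \<subseteq> B" for m k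
      proof (induction m)
        case 0 then show ?case unfolding Dmk_def using imgB by auto
      next
        case (Suc m)
        show ?case
        proof
          fix x assume "x \<in> Dmk (Suc m) k"
          then have x: "x \<in> space M" and "(\<phi> ^^ m) (\<phi> x) \<in> (\<phi> ^^ k) ` A"
            unfolding Dmk_def by (auto simp: funpow_Suc_right simp del: funpow.simps)
          then have "\<phi> x \<in> Dmk m k" unfolding Dmk_def using phi_space[OF x] by simp
          then have "\<phi> x \<in> B" using Suc by auto
          then show "x \<in> B" using x Binv by blast
        qed
      qed
      then show "G \<subseteq> B" unfolding G_def by auto
    qed
  qed
  define D where "D i = Dmk (fst (prod_decode i)) (snd (prod_decode i))" for i
  have DG: "(\<Union>i. D i) = G"
  proof
    show "(\<Union>i. D i) \<subseteq> G" unfolding D_def G_def by auto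
    show "G \<subseteq> (\<Union>i. D i)"
    proof
      fix x assume "x \<in> G"
      then obtain m k where "x \<in> Dmk m k" unfolding G_def by auto
      then have "x \<in> D (prod_encode (m, k))" unfolding D_def by simp
      then show "x \<in> (\<Union>i. D i)" by blast
    qed
  qed
  have cD: "(\<lambda>n. measure M (Dmk m k - (\<phi> ^^ n) ` A)) \<longlonglongrightarrow> 0" for m k
  proof (rule LIMSEQ_I)
    fix r :: real assume r: "0 < r"
    from LIMSEQ_D[OF K[OF C Dmks[of m k]] r] obtain J where
      J: "\<And>j. J \<le> j \<Longrightarrow> \<bar>measure M (Dmk m k - (\<phi> ^^ j) ` Dmk m k)\<bar> < r" by auto
    show "\<exists>no. \<forall>n\<ge>no. norm (measure M (Dmk m k - (\<phi> ^^ n) ` A) - 0) < r"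
    proof (intro exI allI impI)
      fix n assume n: "J + k \<le> n"
      define j where "j = n - k + m"
      have jJ: "J \<le> j" using n unfolding j_def by simp
      have incl: "(\<phi> ^^ j) ` Dmk m k \<subseteq> (\<phi> ^^ n) ` A"
      proof
        fix y assume "y \<in> (\<phi> ^^ j) ` Dmk m k"
        then obtain x where y: "y = (\<phi> ^^ j) x" and "x \<in> Dmk m k" by auto
        then obtain a where a: "a \<in> A" and xa: "(\<phi> ^^ m) x = (\<phi> ^^ k) a" unfolding Dmk_def by auto
        have "(\<phi> ^^ j) x = (\<phi> ^^ (n - k)) ((\<phi> ^^ m) x)" unfolding j_def by (simp add: funpow_add)
        also have "\<dots> = (\<phi> ^^ (n - k)) ((\<phi> ^^ k) a)" using xa by simp
        also have "\<dots> = (\<phi> ^^ n) a" using n funpow_split[of k n \<phi> a] by simp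
        finally show "y \<in> (\<phi> ^^ n) ` A" using y a by auto
      qed
      have "measure M (Dmk m k - (\<phi> ^^ n) ` A) \<le> measure M (Dmk m k - (\<phi> ^^ j) ` Dmk m k)"
        by (rule finite_measure_mono) (use incl Dmks img_sets in auto)
      also have "\<dots> < r" using J[OF jJ] by simp
      finally show "norm (measure M (Dmk m k - (\<phi> ^^ n) ` A) - 0) < r" by simp
    qed
  qed
  have "(\<lambda>n. measure M ((\<Union>i. D i) - (\<phi> ^^ n) ` A)) \<longlonglongrightarrow> 0"
    by (rule union_conv) (use Dmks img_sets[OF As] cD in \<open>auto simp: D_def\<close>)
  then have "(\<lambda>n. measure M (G - (\<phi> ^^ n) ` A)) \<longlonglongrightarrow> 0" unfolding DG .
  moreover have "((\<phi> ^^ n) ` A - G) \<union> (G - (\<phi> ^^ n) ` A) = G - (\<phi> ^^ n) ` A" for n using imgG[of n] by auto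
  ultimately show ?thesis unfolding conv_measure_algebra_def mis using Gs by simp
qed

end

theorem theorem1p1:
  fixes M :: "'a measure" and \<phi> :: "'a \<Rightarrow> 'a" and P :: "('a \<Rightarrow> real) \<Rightarrow> ('a \<Rightarrow> real)"
  assumes "mpds M \<phi>" and "bimeasurable M \<phi>" and "perron_frobenius M \<phi> P"
  shows "((\<forall>A\<in>sets M. \<exists>B. conv_measure_algebra M (\<lambda>n. (\<phi> ^^ n) ` A) B)
          \<longleftrightarrow> (\<forall>f. integrable M f \<longrightarrow> (\<exists>g. conv_L1 M (\<lambda>n. (P ^^ n) f) g)))
       \<and> ((\<forall>f. integrable M f \<longrightarrow> (\<exists>g. conv_L1 M (\<lambda>n. (P ^^ n) f) g))
          \<longleftrightarrow> completion_within M (Sigma_infty M \<phi>) = completion_within M (Sigma_inv M \<phi>))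
       \<and> ((\<forall>A\<in>sets M. \<exists>B. conv_measure_algebra M (\<lambda>n. (\<phi> ^^ n) ` A) B) \<longrightarrow>
            (\<forall>f. integrable M f \<longrightarrow>
               conv_L1 M (\<lambda>n. (P ^^ n) f) (real_cond_exp M (sigma (space M) (Sigma_inv M \<phi>)) f))
          \<and> (\<forall>A\<in>sets M. conv_measure_algebra M (\<lambda>n. (\<phi> ^^ n) ` A) (min_inv_superset M \<phi> A)))"
proof -
  interpret pfs M \<phi> P using assms by (simp add: pfs_def)
  define I where "I = (\<forall>A\<in>sets M. \<exists>B. conv_measure_algebra M (\<lambda>n. (\<phi> ^^ n) ` A) B)"
  define II where "II = (\<forall>f. integrable M f \<longrightarrow> (\<exists>g. conv_L1 M (\<lambda>n. (P ^^ n) f) g))"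
  define III where "III = (completion_within M (Sigma_infty M \<phi>) = completion_within M (Sigma_inv M \<phi>))"
  define C where "C = (\<forall>f. integrable M f \<longrightarrow>
               conv_L1 M (\<lambda>n. (P ^^ n) f) (real_cond_exp M (sigma (space M) (Sigma_inv M \<phi>)) f))"
  define CA where "CA = (\<forall>A\<in>sets M. conv_measure_algebra M (\<lambda>n. (\<phi> ^^ n) ` A) (min_inv_superset M \<phi> A))"
  have III_C: "III \<Longrightarrow> C"
  proof -
    assume h: III
    show C unfolding C_def conv_L1_def Inv_def[symmetric]
    proof (intro allI impI conjI)
      fix f :: "'a \<Rightarrow> real" assume fi: "integrable M f"
      show "integrable M (real_cond_exp M Inv f)"
        using sigma_finite_subalgebra.real_cond_exp_int(1)[OF sfs_Inv fi] .
      show "(\<lambda>n. \<integral>x. \<bar>(P ^^ n) f x - real_cond_exp M Inv f x\<bar> \<partial>M) \<longlonglongrightarrow> 0"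
        by (rule conv_all[OF h[unfolded III_def] fi])
    qed
  qed
  have C_II: "C \<Longrightarrow> II" unfolding C_def II_def by blast
  have II_III': "II \<Longrightarrow> III" unfolding II_def III_def by (rule II_III)
  have I_III': "I \<Longrightarrow> III" unfolding I_def III_def by (rule I_III)
  have C_CA: "C \<Longrightarrow> CA"
  proof -
    assume h: C
    have h': "\<forall>f. integrable M f \<longrightarrow> (\<lambda>n. \<integral>x. \<bar>(P ^^ n) f x - real_cond_exp M Inv f x\<bar> \<partial>M) \<longlonglongrightarrow> 0"
      using h unfolding C_def conv_L1_def Inv_def by blast
    show CA unfolding CA_def using Astar[OF h'] by blast
  qed
  have CA_I: "CA \<Longrightarrow> I" unfolding CA_def I_def by blast
  have "(I \<longleftrightarrow> II) \<and> (II \<longleftrightarrow> III) \<and> (I \<longrightarrow> C \<and> CA)"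
    using III_C C_II II_III' I_III' C_CA CA_I by blast
  then show ?thesis unfolding I_def II_def III_def C_def CA_def .
qed

end
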